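(* Let $X=\bigcup_{n\ge1}X_n$ be a positively graded set. The graded vector space $K[\mathcal P_\infty,X]=\bigoplus_{n\ge1}K[\mathcal P_{n,X}]$, with the operations $\bullet_\gamma$ described in the context, is a shuffle algebra, and it is the free shuffle algebra on $X$: for every shuffle algebra $A$ and every map $\varphi:X\to A$ sending $X_n$ into $A_n$ for all $n$, there is a unique morphism of shuffle algebras $\Phi:K[\mathcal P_\infty,X]\to A$ (a degree-preserving linear map with $\Phi(u\bullet_\gamma v)=\Phi(u)\bullet_\gamma\Phi(v)$) such that $\Phi(\xi_n;x)=\varphi(x)$ for all $x\in X_n$, $n\ge1$.
   Context: Permutations $\sigma\in S_n$ are written as words $(\sigma(1),\dots,\sigma(n))$; $1_n$ is the identity, and $\sigma\cdot\tau$ denotes composition, $(\sigma\cdot\tau)(i)=\sigma(\tau(i))$. For $\sigma\in S_n$, $\tau\in S_m$, $\sigma\times\tau\in S_{n+m}$ is $(\sigma(1),\dots,\sigma(n),\tau(1)+n,\dots,\tau(m)+n)$. For nonnegative integers $n_1,\dots,n_r$ with sum $n$, $Sh(n_1,\dots,n_r)$ is the set of $\sigma\in S_n$ such that $\sigma^{-1}(n_1+\dots+n_{k-1}+1)<\dots<\sigma^{-1}(n_1+\dots+n_k)$ for every $k$. For $n,m\ge0$, $\epsilon_{n,m}=(n+1,\dots,n+m,1,\dots,n)\in Sh(n,m)$. A shuffle algebra is a graded vector space $A=\bigoplus_{n\ge0}A_n$ over a field $K$ with linear maps $\bullet_\gamma:A_n\otimes A_m\to A_{n+m}$ for all $n,m\ge0$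 and $\gamma\in Sh(n,m)$, such that for $x\in A_n$, $y\in A_m$, $z\in A_r$ one has $x\bullet_\gamma(y\bullet_\delta z)=(x\bullet_\sigma y)\bullet_\lambda z$ whenever $\gamma\in Sh(n,m+r)$, $\delta\in Sh(m,r)$, $\sigma\in Sh(n,m)$, $\lambda\in Sh(n+m,r)$ satisfy $(1_n\times\delta)\cdot\gamma=(\sigma\times1_r)\cdot\lambda$. $\mathcal P_{n,X}$ is the set of tuples $(f;x_1,\dots,x_r)$ where $1\le r\le n$, $f:\{1,\dots,n\}\to\{1,\dots,r\}$ is surjective, and $x_i\in X_{|f^{-1}(i)|}$ for $1\le i\le r$; such an element has degree $n$. Maps are written by their images $(f(1),\dots,f(n))$, and for a map $h$ on $\{1,\dots,n\}$ and $\gamma\in S_n$, $h\cdot\gamma$ is $i\mapsto h(\gamma(i))$. For $f:\{1..n\}\to\{1..r\}$ and $g:\{1..m\}\to\{1..k\}$, $f\times g=(f(1),\dots,f(n),g(1)+r,\dots,g(m)+r)$. The operations are $(f;x_1,\dots,x_r)\bullet_\gamma(g;y_1,\dots,y_k)=((f\times g)\cdot\gamma;x_1,\dots,x_r,y_1,\dots,y_k)$ for $\gamma\in Sh(n,m)$. $\xi_n$ denotes the constant map $\{1,\dots,n\}\to\{1\}$, so $(\xi_n;x)\in\mathcal P_{n,X}$ for $x\in X_n$. *)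

theory Defs
  imports Complex_Main "HOL-Library.Poly_Mapping"
begin

text \<open>A permutation of S_n is written as a word (list) (sigma(1),...,sigma(n)).\<close>

definition is_perm :: "nat \<Rightarrow> nat list \<Rightarrow> bool" where
  "is_perm n \<sigma> \<longleftrightarrow> length \<sigma> = n \<and> set \<sigma> = {1..n}"

definition app :: "nat list \<Rightarrow> nat \<Rightarrow> nat" where
  "app \<sigma> i = \<sigma> ! (i - 1)"

definition idw :: "nat \<Rightarrow> nat list" where
  "idw n = [1..<n+1]"

text \<open>Composition (sigma . tau)(i) = sigma(tau(i)); also used for h . gamma, i |-> h(gamma(i)).\<close>
definition comp :: "nat list \<Rightarrow> nat list \<Rightarrow> nat list" where
  "comp \<sigma> \<tau> = map (app \<sigma>) \<tau>"

definition ptimes :: "nat list \<Rightarrow> nat list \<Rightarrow> nat list" where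
  "ptimes \<sigma> \<tau> = \<sigma> @ map (\<lambda>v. v + length \<sigma>) \<tau>"

definition pinv :: "nat list \<Rightarrow> nat \<Rightarrow> nat" where
  "pinv \<sigma> k = (THE i. 1 \<le> i \<and> i \<le> length \<sigma> \<and> app \<sigma> i = k)"

definition Sh :: "nat \<Rightarrow> nat \<Rightarrow> nat list set" where
  "Sh n m = {\<sigma>. is_perm (n + m) \<sigma>
      \<and> (\<forall>i j. 1 \<le> i \<and> i < j \<and> j \<le> n \<longrightarrow> pinv \<sigma> i < pinv \<sigma> j)
      \<and> (\<forall>i j. n + 1 \<le> i \<and> i < j \<and> j \<le> n + m \<longrightarrow> pinv \<sigma> i < pinv \<sigma> j)}"

text \<open>A graded vector space over the field 'k is given by its homogeneous components
  A n, each a subspace of a common ambient vector space (scale) that serves only as a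
  container; the operation bullet_gamma : A_n x A_m -> A_(n+m) is op n m gamma.\<close>

definition lin_on :: "('k::field \<Rightarrow> 'u::ab_group_add \<Rightarrow> 'u) \<Rightarrow> ('k \<Rightarrow> 'v::ab_group_add \<Rightarrow> 'v)
    \<Rightarrow> 'u set \<Rightarrow> ('u \<Rightarrow> 'v) \<Rightarrow> bool" where
  "lin_on s1 s2 S f \<longleftrightarrow>
     (\<forall>x\<in>S. \<forall>y\<in>S. f (x + y) = f x + f y) \<and> (\<forall>c. \<forall>x\<in>S. f (s1 c x) = s2 c (f x))"

definition graded_vs :: "('k::field \<Rightarrow> 'v::ab_group_add \<Rightarrow> 'v) \<Rightarrow> (nat \<Rightarrow> 'v set) \<Rightarrow> bool" where
  "graded_vs scale A \<longleftrightarrow> vector_space scale \<and> (\<forall>n. module.subspace scale (A n))"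

definition shuffle_algebra :: "('k::field \<Rightarrow> 'v::ab_group_add \<Rightarrow> 'v) \<Rightarrow> (nat \<Rightarrow> 'v set)
    \<Rightarrow> (nat \<Rightarrow> nat \<Rightarrow> nat list \<Rightarrow> 'v \<Rightarrow> 'v \<Rightarrow> 'v) \<Rightarrow> bool" where
  "shuffle_algebra scale A op \<longleftrightarrow>
     graded_vs scale A
     \<and> (\<forall>n m \<gamma>. \<gamma> \<in> Sh n m \<longrightarrow>
          (\<forall>x\<in>A n. \<forall>y\<in>A m. op n m \<gamma> x y \<in> A (n + m))
        \<and> (\<forall>y\<in>A m. lin_on scale scale (A n) (\<lambda>x. op n m \<gamma> x y))
        \<and> (\<forall>x\<in>A n. lin_on scale scale (A m) (\<lambda>y. op n m \<gamma> x y)))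
     \<and> (\<forall>n m r \<gamma> \<delta> \<sigma> lam. \<gamma> \<in> Sh n (m + r) \<and> \<delta> \<in> Sh m r \<and> \<sigma> \<in> Sh n m \<and> lam \<in> Sh (n + m) r
          \<and> comp (ptimes (idw n) \<delta>) \<gamma> = comp (ptimes \<sigma> (idw r)) lam \<longrightarrow>
          (\<forall>x\<in>A n. \<forall>y\<in>A m. \<forall>z\<in>A r.
             op n (m + r) \<gamma> x (op m r \<delta> y z) = op (n + m) r lam (op n m \<sigma> x y) z))"

definition shuffle_hom ::
  "('k::field \<Rightarrow> 'u::ab_group_add \<Rightarrow> 'u) \<Rightarrow> (nat \<Rightarrow> 'u set) \<Rightarrow> (nat \<Rightarrow> nat \<Rightarrow> nat list \<Rightarrow> 'u \<Rightarrow> 'u \<Rightarrow> 'u)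
   \<Rightarrow> ('k \<Rightarrow> 'v::ab_group_add \<Rightarrow> 'v) \<Rightarrow> (nat \<Rightarrow> 'v set) \<Rightarrow> (nat \<Rightarrow> nat \<Rightarrow> nat list \<Rightarrow> 'v \<Rightarrow> 'v \<Rightarrow> 'v)
   \<Rightarrow> (nat \<Rightarrow> 'u \<Rightarrow> 'v) \<Rightarrow> bool" where
  "shuffle_hom s1 A op1 s2 B op2 \<Phi> \<longleftrightarrow>
     (\<forall>n. (\<forall>u\<in>A n. \<Phi> n u \<in> B n) \<and> lin_on s1 s2 (A n) (\<Phi> n))
     \<and> (\<forall>n m \<gamma> u v. \<gamma> \<in> Sh n m \<and> u \<in> A n \<and> v \<in> A m \<longrightarrow>
          \<Phi> (n + m) (op1 n m \<gamma> u v) = op2 n m \<gamma> (\<Phi> n u) (\<Phi> m v))"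

text \<open>An element (f; x_1,...,x_r) of P_{n,X} is the pair (f, [x_1,...,x_r]) where f is the
  word (f(1),...,f(n)). The graded set X is given by its components X n.\<close>

definition fib :: "nat list \<Rightarrow> nat \<Rightarrow> nat" where
  "fib f i = card {j. 1 \<le> j \<and> j \<le> length f \<and> app f j = i}"

definition P :: "nat \<Rightarrow> (nat \<Rightarrow> 'x set) \<Rightarrow> (nat list \<times> 'x list) set" where
  "P n X = {(f, xs). length f = n \<and> 1 \<le> length xs \<and> length xs \<le> n
       \<and> set f = {1..length xs}
       \<and> (\<forall>i. 1 \<le> i \<and> i \<le> length xs \<longrightarrow> xs ! (i - 1) \<in> X (fib f i))}"

definition mtimes :: "nat list \<Rightarrow> nat \<Rightarrow> nat list \<Rightarrow> nat list" where
  "mtimes f r g = f @ map (\<lambda>v. v + r) g"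

definition basis_op :: "nat list \<Rightarrow> (nat list \<times> 'x list) \<Rightarrow> (nat list \<times> 'x list)
    \<Rightarrow> (nat list \<times> 'x list)" where
  "basis_op \<gamma> a b = (comp (mtimes (fst a) (length (snd a)) (fst b)) \<gamma>, snd a @ snd b)"

text \<open>The vector space K[S] is realised as finitely supported functions S -> K.\<close>
definition fscale :: "'k::field \<Rightarrow> ('s \<Rightarrow>\<^sub>0 'k) \<Rightarrow> ('s \<Rightarrow>\<^sub>0 'k)" where
  "fscale c p = Poly_Mapping.map (\<lambda>a. c * a) p"

text \<open>Degree n component K[P_{n,X}] (zero for n = 0, as P_{0,X} is empty).\<close>
definition FA :: "(nat \<Rightarrow> 'x set) \<Rightarrow> nat \<Rightarrow> ((nat list \<times> 'x list) \<Rightarrow>\<^sub>0 'k::field) set" where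
  "FA X n = {p. Poly_Mapping.keys p \<subseteq> P n X}"

definition fop :: "nat \<Rightarrow> nat \<Rightarrow> nat list \<Rightarrow> ((nat list \<times> 'x list) \<Rightarrow>\<^sub>0 'k::field)
    \<Rightarrow> ((nat list \<times> 'x list) \<Rightarrow>\<^sub>0 'k) \<Rightarrow> ((nat list \<times> 'x list) \<Rightarrow>\<^sub>0 'k)" where
  "fop n m \<gamma> p q = (\<Sum>a\<in>Poly_Mapping.keys p. \<Sum>b\<in>Poly_Mapping.keys q.
       Poly_Mapping.single (basis_op \<gamma> a b) (Poly_Mapping.lookup p a * Poly_Mapping.lookup q b))"

definition gen :: "nat \<Rightarrow> 'x \<Rightarrow> ((nat list \<times> 'x list) \<Rightarrow>\<^sub>0 'k::field)" where
  "gen n x = Poly_Mapping.single (replicate n 1, [x]) 1"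

end

theory Submission
  imports Defs "HOL-Library.Multiset"
begin


fun merge :: "bool list \<Rightarrow> 'a list \<Rightarrow> 'a list \<Rightarrow> 'a list" where
  "merge [] u v = []"
| "merge (b # c) u v = (if b then hd u # merge c (tl u) v else hd v # merge c u (tl v))"

definition valid :: "bool list \<Rightarrow> 'a list \<Rightarrow> 'a list \<Rightarrow> bool" where
  "valid c u v \<longleftrightarrow> length (filter id c) = length u \<and> length (filter Not c) = length v"

lemma merge_length[simp]: "length (merge c u v) = length c"
  by (induction c arbitrary: u v) auto

lemma merge_map: "valid c u v \<Longrightarrow> map h (merge c u v) = merge c (map h u) (map h v)"
proof (induction c arbitrary: u v)
  case Nil then show ?case by simp
next
  case (Cons b c)
  show ?case
  proof (cases b)
    case True
    then obtain x u' where "u = x # u'" using Cons.prems by (cases u) (auto simp: valid_def)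
    then show ?thesis using Cons.IH[of u' v] Cons.prems True by (simp add: valid_def)
  next
    case False
    then obtain x v' where "v = x # v'" using Cons.prems by (cases v) (auto simp: valid_def)
    then show ?thesis using Cons.IH[of u v'] Cons.prems False by (simp add: valid_def)
  qed
qed

lemma merge_filter: "merge (map Q xs) (filter Q xs) (filter (\<lambda>x. \<not> Q x) xs) = xs"
  by (induction xs) auto

lemma valid_filter: "valid (map Q xs) (filter Q xs) (filter (\<lambda>x. \<not> Q x) xs)"
  by (induction xs) (auto simp: valid_def)

lemma merge_filter1: "valid c u v \<Longrightarrow> \<forall>x\<in>set v. \<not> Q x \<Longrightarrow> filter Q (merge c u v) = filter Q u"
proof (induction c arbitrary: u v)
  case Nil then show ?case by (simp add: valid_def)
next
  case (Cons b c)
  show ?case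
  proof (cases b)
    case True
    then obtain x u' where "u = x # u'" using Cons.prems by (cases u) (auto simp: valid_def)
    then show ?thesis using Cons.IH[of u' v] Cons.prems True by (simp add: valid_def)
  next
    case False
    then obtain x v' where "v = x # v'" using Cons.prems by (cases v) (auto simp: valid_def)
    then show ?thesis using Cons.IH[of u v'] Cons.prems False by (simp add: valid_def)
  qed
qed

lemma merge_filter2: "valid c u v \<Longrightarrow> \<forall>x\<in>set u. \<not> Q x \<Longrightarrow> filter Q (merge c u v) = filter Q v"
proof (induction c arbitrary: u v)
  case Nil then show ?case by (simp add: valid_def)
next
  case (Cons b c)
  show ?case
  proof (cases b)
    case True
    then obtain x u' where "u = x # u'" using Cons.prems by (cases u) (auto simp: valid_def)
    then show ?thesis using Cons.IH[of u' v] Cons.prems True by (simp add: valid_def)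
  next
    case False
    then obtain x v' where "v = x # v'" using Cons.prems by (cases v) (auto simp: valid_def)
    then show ?thesis using Cons.IH[of u v'] Cons.prems False by (simp add: valid_def)
  qed
qed

lemma merge_pattern: "valid c u v \<Longrightarrow> \<forall>x\<in>set u. Q x \<Longrightarrow> \<forall>x\<in>set v. \<not> Q x \<Longrightarrow> map Q (merge c u v) = c"
proof (induction c arbitrary: u v)
  case Nil then show ?case by (simp add: valid_def)
next
  case (Cons b c)
  show ?case
  proof (cases b)
    case True
    then obtain x u' where "u = x # u'" using Cons.prems by (cases u) (auto simp: valid_def)
    then show ?thesis using Cons.IH[of u' v] Cons.prems True by (simp add: valid_def)
  next
    case False
    then obtain x v' where "v = x # v'" using Cons.prems by (cases v) (auto simp: valid_def)
    then show ?thesis using Cons.IH[of u v'] Cons.prems False by (simp add: valid_def)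
  qed
qed

lemma sorted_wrt_filter_iff:
  "sorted_wrt R (filter Q xs) \<longleftrightarrow> sorted_wrt (\<lambda>a b. Q a \<longrightarrow> Q b \<longrightarrow> R a b) xs"
  by (induction xs) auto

lemma pinv_nth: "distinct \<sigma> \<Longrightarrow> p < length \<sigma> \<Longrightarrow> pinv \<sigma> (\<sigma> ! p) = Suc p"
  unfolding pinv_def app_def
proof (rule the_equality)
  fix i assume d: "distinct \<sigma>" and p: "p < length \<sigma>"
    and i: "1 \<le> i \<and> i \<le> length \<sigma> \<and> \<sigma> ! (i - 1) = \<sigma> ! p"
  have i1: "i - 1 < length \<sigma>" using i by linarith
  have "i - 1 = p" using nth_eq_iff_index_eq[OF d i1 p] i by simp
  then show "i = Suc p" using i by linarith
qed auto

lemma upt_sorted_unique: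
  assumes "sorted_wrt (<) xs" "set xs = {a..<b}"
  shows "xs = [a..<b]"
  using assms by (metis sorted_list_of_set.idem_if_sorted_distinct sorted_list_of_set_range strict_sorted_iff)



lemma ord_from_sorted:
  assumes d: "distinct \<gamma>" and s: "sorted_wrt (\<lambda>a b. Q a \<longrightarrow> Q b \<longrightarrow> a < b) \<gamma>"
    and i: "i \<in> set \<gamma>" and j: "j \<in> set \<gamma>" and q: "Q i" "Q j" and ij: "(i::nat) < j"
  shows "pinv \<gamma> i < pinv \<gamma> j"
proof -
  obtain p where p: "p < length \<gamma>" "\<gamma> ! p = i" using i by (auto simp: in_set_conv_nth)
  obtain q where qq: "q < length \<gamma>" "\<gamma> ! q = j" using j by (auto simp: in_set_conv_nth)
  have "p \<noteq> q" using p qq ij by auto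
  moreover have "\<not> q < p"
  proof
    assume "q < p"
    then have "\<gamma> ! q < \<gamma> ! p" using s p qq q by (auto simp: sorted_wrt_iff_nth_less)
    then show False using p qq ij by simp
  qed
  ultimately have "p < q" by simp
  then show ?thesis using pinv_nth[OF d p(1)] pinv_nth[OF d qq(1)] p qq by simp
qed

lemma sorted_from_ord:
  assumes d: "distinct \<gamma>"
    and o: "\<And>i j. Q i \<Longrightarrow> Q j \<Longrightarrow> i < j \<Longrightarrow> i \<in> set \<gamma> \<Longrightarrow> j \<in> set \<gamma> \<Longrightarrow> pinv \<gamma> i < pinv \<gamma> (j::nat)"
  shows "sorted_wrt (\<lambda>a b. Q a \<longrightarrow> Q b \<longrightarrow> a < b) \<gamma>"
  unfolding sorted_wrt_iff_nth_less
proof (intro allI impI)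
  fix p q assume pq: "p < q" "q < length \<gamma>" and qp: "Q (\<gamma> ! p)" and qq: "Q (\<gamma> ! q)"
  have ne: "\<gamma> ! p \<noteq> \<gamma> ! q" using d pq by (simp add: nth_eq_iff_index_eq)
  show "\<gamma> ! p < \<gamma> ! q"
  proof (rule ccontr)
    assume "\<not> \<gamma> ! p < \<gamma> ! q"
    then have "\<gamma> ! q < \<gamma> ! p" using ne by simp
    then have "pinv \<gamma> (\<gamma> ! q) < pinv \<gamma> (\<gamma> ! p)" using o qp qq pq by auto
    then show False using pinv_nth[OF d, of p] pinv_nth[OF d, of q] pq by simp
  qed
qed

lemma set_filter_split: "set xs = set (filter Q xs) \<union> set (filter (\<lambda>x. \<not> Q x) xs)"
  by auto

lemma Sh_char: "\<gamma> \<in> Sh n m \<longleftrightarrow> length \<gamma> = n + m \<and> filter (\<lambda>v. v \<le> n) \<gamma> = [1..<n+1]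
    \<and> filter (\<lambda>v. n < v) \<gamma> = [n+1..<n+m+1]"
proof
  assume a: "\<gamma> \<in> Sh n m"
  then have l: "length \<gamma> = n + m" and st: "set \<gamma> = {1..n+m}" by (auto simp: Sh_def is_perm_def)
  have d: "distinct \<gamma>" using l st by (intro card_distinct) simp
  have o1: "\<forall>i j. 1 \<le> i \<and> i < j \<and> j \<le> n \<longrightarrow> pinv \<gamma> i < pinv \<gamma> j" using a by (simp add: Sh_def)
  have o2: "\<forall>i j. n + 1 \<le> i \<and> i < j \<and> j \<le> n + m \<longrightarrow> pinv \<gamma> i < pinv \<gamma> j" using a by (simp add: Sh_def)
  have s1: "sorted_wrt (\<lambda>a b. a \<le> n \<longrightarrow> b \<le> n \<longrightarrow> a < b) \<gamma>"
  proof (rule sorted_from_ord[OF d])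
    fix i j assume h: "i \<le> n" "j \<le> n" "i < j" "i \<in> set \<gamma>" "j \<in> set \<gamma>"
    have "1 \<le> i" using h(4) st by simp
    then show "pinv \<gamma> i < pinv \<gamma> j" using o1 h by blast
  qed
  have s2: "sorted_wrt (\<lambda>a b. n < a \<longrightarrow> n < b \<longrightarrow> a < b) \<gamma>"
  proof (rule sorted_from_ord[OF d])
    fix i j assume h: "n < i" "n < j" "i < j" "i \<in> set \<gamma>" "j \<in> set \<gamma>"
    have "j \<le> n + m" using h(5) st by simp
    then show "pinv \<gamma> i < pinv \<gamma> j" using o2 h by simp
  qed
  have t1: "sorted_wrt (<) (filter (\<lambda>v. v \<le> n) \<gamma>)" using s1 by (simp only: sorted_wrt_filter_iff)
  have t2: "sorted_wrt (<) (filter (\<lambda>v. n < v) \<gamma>)" using s2 by (simp only: sorted_wrt_filter_iff)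
  have u1: "set (filter (\<lambda>v. v \<le> n) \<gamma>) = {1..<n+1}" using st by auto
  have u2: "set (filter (\<lambda>v. n < v) \<gamma>) = {n+1..<n+m+1}" using st by auto
  have "filter (\<lambda>v. v \<le> n) \<gamma> = [1..<n+1]" by (rule upt_sorted_unique[OF t1 u1])
  moreover have "filter (\<lambda>v. n < v) \<gamma> = [n+1..<n+m+1]" by (rule upt_sorted_unique[OF t2 u2])
  ultimately show "length \<gamma> = n + m \<and> filter (\<lambda>v. v \<le> n) \<gamma> = [1..<n+1]
    \<and> filter (\<lambda>v. n < v) \<gamma> = [n+1..<n+m+1]" using l by simp
next
  assume a: "length \<gamma> = n + m \<and> filter (\<lambda>v. v \<le> n) \<gamma> = [1..<n+1]
    \<and> filter (\<lambda>v. n < v) \<gamma> = [n+1..<n+m+1]"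
  have e: "set \<gamma> = set (filter (\<lambda>v. v \<le> n) \<gamma>) \<union> set (filter (\<lambda>v. n < v) \<gamma>)" by auto
  have st: "set \<gamma> = {1..n+m}" unfolding e using a by auto
  have d: "distinct \<gamma>" using a st by (intro card_distinct) simp
  have s1: "sorted_wrt (\<lambda>a b. a \<le> n \<longrightarrow> b \<le> n \<longrightarrow> a < b) \<gamma>"
    using a by (metis sorted_wrt_filter_iff sorted_wrt_upt)
  have s2: "sorted_wrt (\<lambda>a b. n < a \<longrightarrow> n < b \<longrightarrow> a < b) \<gamma>"
    using a by (metis sorted_wrt_filter_iff sorted_wrt_upt)
  show "\<gamma> \<in> Sh n m" unfolding Sh_def is_perm_def
  proof (intro CollectI conjI allI impI)
    fix i j assume "1 \<le> i \<and> i < j \<and> j \<le> n"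
    then show "pinv \<gamma> i < pinv \<gamma> j" using ord_from_sorted[OF d s1] st by auto
  next
    fix i j assume "n + 1 \<le> i \<and> i < j \<and> j \<le> n + m"
    then show "pinv \<gamma> i < pinv \<gamma> j" using ord_from_sorted[OF d s2] st by auto
  qed (use a st in auto)
qed


declare upt_Suc[simp del]

lemma app_upt1: "map (app (A @ B)) [1..<length A + 1] = A"
  by (rule nth_equalityI) (auto simp: app_def nth_append)

lemma app_upt2: "map (app (A @ B)) [length A + 1..<length A + length B + 1] = B"
  by (rule nth_equalityI) (auto simp: app_def nth_append)

lemma app_upt0: "map (app A) [1..<length A + 1] = A"
  using app_upt1[of A "[]"] by simp

lemma map_sub_upt: "map (\<lambda>v. v - n) [n + 1..<n + k + 1] = [1..<k + 1]"
  by (rule nth_equalityI) auto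

lemma perm_range: "is_perm N \<gamma> \<Longrightarrow> v \<in> set \<gamma> \<Longrightarrow> 1 \<le> v \<and> v \<le> N"
  by (auto simp: is_perm_def)

lemma Sh_perm: "\<gamma> \<in> Sh n m \<Longrightarrow> is_perm (n + m) \<gamma>"
  by (simp add: Sh_def)

lemma comp_assoc:
  assumes "\<forall>v\<in>set B. 1 \<le> v \<and> v \<le> length A"
  shows "comp (comp F A) B = comp F (comp A B)"
  unfolding comp_def using assms by (auto simp: app_def)

lemma mtimes_assoc: "mtimes f ra (mtimes g rb h) = mtimes (mtimes f ra g) (ra + rb) h"
  by (simp add: mtimes_def add.assoc)

lemma CL1:
  assumes "\<forall>v\<in>set \<delta>. 1 \<le> v \<and> v \<le> length G"
  shows "mtimes f r (comp G \<delta>) = comp (mtimes f r G) (ptimes (idw (length f)) \<delta>)"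
proof -
  have e1: "map (app (f @ map (\<lambda>v. v + r) G)) [1..<length f + 1] = f" by (rule app_upt1)
  have "comp (mtimes f r G) (ptimes (idw (length f)) \<delta>)
      = map (app (f @ map (\<lambda>v. v + r) G)) [1..<length f + 1]
        @ map (\<lambda>v. app (f @ map (\<lambda>v. v + r) G) (v + length f)) \<delta>"
    by (simp add: comp_def mtimes_def ptimes_def idw_def)
  also have "\<dots> = f @ map (\<lambda>v. app G v + r) \<delta>"
    unfolding e1 using assms by (auto simp: app_def nth_append)
  finally show ?thesis by (simp add: mtimes_def comp_def)
qed

lemma map_add_upt1: "map (\<lambda>v. v + a) [1..<k + 1] = [a + 1..<a + k + 1]"
  by (rule nth_equalityI) auto

lemma CL3:
  assumes "length \<sigma> = length G" "\<forall>v\<in>set \<sigma>. 1 \<le> v \<and> v \<le> length G"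
  shows "mtimes (comp G \<sigma>) r h = comp (mtimes G r h) (ptimes \<sigma> (idw (length h)))"
proof -
  have "comp (mtimes G r h) (ptimes \<sigma> (idw (length h)))
      = comp (mtimes G r h) \<sigma> @ map (app (G @ map (\<lambda>v. v + r) h)) (map (\<lambda>v. v + length G) [1..<length h + 1])"
    using assms(1) by (simp add: comp_def mtimes_def ptimes_def idw_def del: map_map)
  also have "map (\<lambda>v. v + length G) [1..<length h + 1] = [length G + 1..<length G + length (map (\<lambda>v. v + r) h) + 1]"
    by (simp only: map_add_upt1 length_map)
  also have "comp (mtimes G r h) \<sigma> = comp G \<sigma>"
    using assms(2) by (auto simp: comp_def mtimes_def app_def nth_append)
  finally show ?thesis by (simp only: app_upt2 mtimes_def)
qed

lemma len_ptimes[simp]: "length (ptimes a b) = length a + length b" by (simp add: ptimes_def)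
lemma len_idw[simp]: "length (idw n) = n" by (simp add: idw_def)
lemma len_mtimes[simp]: "length (mtimes f r g) = length f + length g" by (simp add: mtimes_def)
lemma len_comp[simp]: "length (comp a b) = length b" by (simp add: comp_def)

lemma Sh_range: "\<gamma> \<in> Sh n m \<Longrightarrow> \<forall>v\<in>set \<gamma>. 1 \<le> v \<and> v \<le> n + m"
  using Sh_perm perm_range by blast

lemma Sh_len: "\<gamma> \<in> Sh n m \<Longrightarrow> length \<gamma> = n + m"
  by (simp add: Sh_def is_perm_def)

lemma basis_assoc:
  assumes l: "length f = n" "length g = m" "length h = r"
   and s: "\<gamma> \<in> Sh n (m+r)" "\<delta> \<in> Sh m r" "\<sigma> \<in> Sh n m" "lam \<in> Sh (n+m) r"
   and c: "comp (ptimes (idw n) \<delta>) \<gamma> = comp (ptimes \<sigma> (idw r)) lam"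
  shows "basis_op \<gamma> (f,xs) (basis_op \<delta> (g,ys) (h,zs)) = basis_op lam (basis_op \<sigma> (f,xs) (g,ys)) (h,zs)"
proof -
  have dr: "\<forall>v\<in>set \<delta>. 1 \<le> v \<and> v \<le> length (mtimes g (length ys) h)" using Sh_range[OF s(2)] l by simp
  have gr: "\<forall>v\<in>set \<gamma>. 1 \<le> v \<and> v \<le> length (ptimes (idw n) \<delta>)" using Sh_range[OF s(1)] Sh_len[OF s(2)] by simp
  have sr: "\<forall>v\<in>set \<sigma>. 1 \<le> v \<and> v \<le> length (mtimes f (length xs) g)" using Sh_range[OF s(3)] l by simp
  have sl: "length \<sigma> = length (mtimes f (length xs) g)" using Sh_len[OF s(3)] l by simp
  have lr: "\<forall>v\<in>set lam. 1 \<le> v \<and> v \<le> length (ptimes \<sigma> (idw r))" using Sh_range[OF s(4)] Sh_len[OF s(3)] by simp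
  have "comp (mtimes f (length xs) (comp (mtimes g (length ys) h) \<delta>)) \<gamma>
      = comp (comp (mtimes f (length xs) (mtimes g (length ys) h)) (ptimes (idw n) \<delta>)) \<gamma>"
    using CL1[OF dr, of f "length xs"] l by simp
  also have "\<dots> = comp (mtimes f (length xs) (mtimes g (length ys) h)) (comp (ptimes (idw n) \<delta>) \<gamma>)"
    by (rule comp_assoc[OF gr])
  also have "\<dots> = comp (mtimes (mtimes f (length xs) g) (length xs + length ys) h) (comp (ptimes \<sigma> (idw r)) lam)"
    by (simp add: c mtimes_assoc)
  also have "\<dots> = comp (comp (mtimes (mtimes f (length xs) g) (length xs + length ys) h) (ptimes \<sigma> (idw r))) lam"
    by (rule comp_assoc[OF lr, symmetric])
  also have "\<dots> = comp (mtimes (comp (mtimes f (length xs) g) \<sigma>) (length xs + length ys) h) lam"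
    using CL3[OF sl sr, of "length xs + length ys" h] l by simp
  finally show ?thesis by (simp add: basis_op_def)
qed

lemma fib_len: "fib w i = length (filter (\<lambda>v. v = i) w)"
proof -
  have "{j. 1 \<le> j \<and> j \<le> length w \<and> app w j = i} = Suc ` {j. j < length w \<and> w ! j = i}"
  proof (rule set_eqI)
    fix j show "j \<in> {j. 1 \<le> j \<and> j \<le> length w \<and> app w j = i} \<longleftrightarrow> j \<in> Suc ` {j. j < length w \<and> w ! j = i}"
      by (cases j) (auto simp: app_def)
  qed
  then have "fib w i = card {j. j < length w \<and> w ! j = i}"
    by (simp add: fib_def card_image)
  then show ?thesis by (simp add: length_filter_conv_card)
qed

lemma comp_perm_mset:
  assumes "is_perm (length F) \<gamma>"
  shows "mset (comp F \<gamma>) = mset F"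
proof -
  have d: "distinct \<gamma>" using assms by (intro card_distinct) (auto simp: is_perm_def)
  have "mset \<gamma> = mset [1..<length F + 1]"
    using assms d by (subst set_eq_iff_mset_eq_distinct[symmetric]) (auto simp: is_perm_def)
  then have "mset (comp F \<gamma>) = mset (map (app F) [1..<length F + 1])"
    by (simp add: comp_def)
  then show ?thesis by (simp only: app_upt0)
qed

lemma comp_perm_filter:
  assumes "is_perm (length F) \<gamma>"
  shows "length (filter Q (comp F \<gamma>)) = length (filter Q F)" "set (comp F \<gamma>) = set F"
proof -
  have "mset (filter Q (comp F \<gamma>)) = mset (filter Q F)" using comp_perm_mset[OF assms] by simp
  then show "length (filter Q (comp F \<gamma>)) = length (filter Q F)" by (metis size_mset)
  show "set (comp F \<gamma>) = set F" using comp_perm_mset[OF assms] by (metis set_mset_mset)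
qed

lemma P_closed:
  assumes a: "(f,xs) \<in> P n X" and b: "(g,ys) \<in> P m X" and s: "\<gamma> \<in> Sh n m"
  shows "basis_op \<gamma> (f,xs) (g,ys) \<in> P (n+m) X"
proof -
  define F where "F = mtimes f (length xs) g"
  have lf: "length f = n" "length g = m" using a b by (auto simp: P_def)
  have pF: "is_perm (length F) \<gamma>" using Sh_perm[OF s] lf by (simp add: F_def)
  have sf: "set f = {1..length xs}" and sg: "set g = {1..length ys}" using a b by (auto simp: P_def)
  have setF: "set F = {1..length xs + length ys}"
  proof -
    have "set F = set f \<union> (\<lambda>v. v + length xs) ` set g" by (simp add: F_def mtimes_def)
    also have "\<dots> = {1..length xs + length ys}" unfolding sf sg
      by (auto simp: image_iff intro!: bexI[of _ "_ - length xs"])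
    finally show ?thesis .
  qed
  have fibF: "fib (comp F \<gamma>) i = fib F i" for i
    unfolding fib_len by (rule comp_perm_filter(1)[OF pF])
  show ?thesis unfolding P_def basis_op_def fst_conv snd_conv
  proof (intro CollectI case_prodI conjI allI impI)
    show "length (comp (mtimes f (length xs) g) \<gamma>) = n + m" using Sh_len[OF s] by simp
    show "1 \<le> length (xs @ ys)" using a by (simp add: P_def)
    show "length (xs @ ys) \<le> n + m" using a b by (simp add: P_def)
    show "set (comp (mtimes f (length xs) g) \<gamma>) = {1..length (xs @ ys)}"
      using comp_perm_filter(2)[OF pF] setF by (simp add: F_def)
  next
    fix i assume i: "1 \<le> i \<and> i \<le> length (xs @ ys)"
    show "(xs @ ys) ! (i - 1) \<in> X (fib (comp (mtimes f (length xs) g) \<gamma>) i)"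
    proof (cases "i \<le> length xs")
      case True
      have "filter (\<lambda>v. v = i) (map (\<lambda>v. v + length xs) g) = []"
        using sg True by (auto simp: filter_empty_conv)
      then have "fib F i = fib f i" by (simp add: fib_len F_def mtimes_def)
      moreover have "xs ! (i - 1) \<in> X (fib f i)" using a i True by (auto simp: P_def)
      moreover have "i - 1 < length xs" using True i by linarith
      then have "(xs @ ys) ! (i - 1) = xs ! (i - 1)" by (simp add: nth_append)
      ultimately show ?thesis using fibF by (simp add: F_def)
    next
      case False
      have "filter (\<lambda>v. v = i) f = []"
        using sf False by (auto simp: filter_empty_conv)
      moreover have "filter (\<lambda>v. v = i) (map (\<lambda>v. v + length xs) g) = map (\<lambda>v. v + length xs) (filter (\<lambda>v. v = i - length xs) g)"
        using False by (auto simp: filter_map o_def intro!: arg_cong2[where f=map] filter_cong)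
      ultimately have "fib F i = fib g (i - length xs)" by (simp add: fib_len F_def mtimes_def)
      moreover have "ys ! (i - length xs - 1) \<in> X (fib g (i - length xs))"
      proof -
        have "\<forall>j. 1 \<le> j \<and> j \<le> length ys \<longrightarrow> ys ! (j - 1) \<in> X (fib g j)" using b by (simp add: P_def)
        moreover have "1 \<le> i - length xs \<and> i - length xs \<le> length ys" using i False by auto
        ultimately show ?thesis by blast
      qed
      moreover have "\<not> i - 1 < length xs" "i - 1 - length xs = i - length xs - 1" using False i by linarith+
      then have "(xs @ ys) ! (i - 1) = ys ! (i - length xs - 1)" by (simp add: nth_append)
      ultimately show ?thesis using fibF by (simp add: F_def)
    qed
  qed
qed


definition cnt1 :: "nat list \<Rightarrow> nat" where
  "cnt1 f = length (filter (\<lambda>v. v = 1) f)"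

definition canon :: "nat list \<Rightarrow> nat list" where
  "canon f = merge (map (\<lambda>v. v = 1) f) [1..<cnt1 f + 1] [cnt1 f + 1..<length f + 1]"

definition peel :: "nat list \<Rightarrow> nat list" where
  "peel f = map (\<lambda>v. v - 1) (filter (\<lambda>v. v \<noteq> 1) f)"

lemma len_filter_map_id: "length (filter id (map Q xs)) = length (filter Q xs)"
  by (induction xs) auto

lemma len_filter_map_not: "length (filter Not (map Q xs)) = length (filter (\<lambda>x. \<not> Q x) xs)"
  by (induction xs) auto

lemma len_compl: "length (filter (\<lambda>x. \<not> Q x) xs) = length xs - length (filter Q xs)"
  using sum_length_filter_compl[of Q xs] by simp

lemma Sh_merge: "\<gamma> \<in> Sh n m \<Longrightarrow> \<gamma> = merge (map (\<lambda>v. v \<le> n) \<gamma>) [1..<n+1] [n+1..<n+m+1]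
   \<and> valid (map (\<lambda>v. v \<le> n) \<gamma>) [1..<n+1] [n+1..<n+m+1]"
proof -
  assume s: "\<gamma> \<in> Sh n m"
  have e: "(\<lambda>v. \<not> v \<le> n) = (\<lambda>v. n < v)" by auto
  have "\<gamma> = merge (map (\<lambda>v. v \<le> n) \<gamma>) (filter (\<lambda>v. v \<le> n) \<gamma>) (filter (\<lambda>v. \<not> v \<le> n) \<gamma>)"
    by (rule merge_filter[symmetric])
  moreover have "valid (map (\<lambda>v. v \<le> n) \<gamma>) (filter (\<lambda>v. v \<le> n) \<gamma>) (filter (\<lambda>v. \<not> v \<le> n) \<gamma>)"
    by (rule valid_filter)
  ultimately show ?thesis using s unfolding e Sh_char by simp
qed

lemma valid_len: "valid c u v \<Longrightarrow> length u' = length u \<Longrightarrow> length v' = length v \<Longrightarrow> valid c u' v'"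
  by (simp add: valid_def)

lemma single_block:
  assumes s: "\<gamma> \<in> Sh n m" and b: "(g, ys) \<in> P m X"
  defines "w \<equiv> comp (mtimes (replicate n 1) 1 g) \<gamma>"
  shows "cnt1 w = n" "canon w = \<gamma>" "peel w = g" "length w = n + m"
proof -
  define c where "c = map (\<lambda>v. v \<le> n) \<gamma>"
  have g: "\<gamma> = merge c [1..<n+1] [n+1..<n+m+1]" and v: "valid c [1..<n+1] [n+1..<n+m+1]"
    using Sh_merge[OF s] by (auto simp: c_def)
  have lg: "length g = m" and sg: "set g = {1..length ys}" using b by (auto simp: P_def)
  define M where "M = replicate n 1 @ map (\<lambda>v. v + 1) g"
  have "w = map (app M) \<gamma>" by (simp add: w_def comp_def mtimes_def M_def)
  also have "\<dots> = merge c (map (app M) [1..<n+1]) (map (app M) [n+1..<n+m+1])"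
    by (subst g) (rule merge_map[OF v])
  also have "map (app M) [1..<n+1] = replicate n 1"
    using app_upt1[of "replicate n 1" "map (\<lambda>v. v + 1) g"] by (simp add: M_def)
  also have "map (app M) [n+1..<n+m+1] = map (\<lambda>v. v + 1) g"
    using app_upt2[of "replicate n 1" "map (\<lambda>v. v + 1) g"] lg by (simp add: M_def)
  finally have w: "w = merge c (replicate n 1) (map (\<lambda>v. v + 1) g)" .
  have v2: "valid c (replicate n 1) (map (\<lambda>v. v + 1) g)" using v lg by (simp add: valid_def)
  have pat: "map (\<lambda>v. v = 1) w = c" unfolding w by (rule merge_pattern[OF v2]) (use sg in auto)
  have f1: "filter (\<lambda>v. v = 1) w = replicate n 1" unfolding w
    by (subst merge_filter1[OF v2]) (use sg in auto)
  have f2: "filter (\<lambda>v. v \<noteq> 1) w = map (\<lambda>v. v + 1) g" unfolding w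
    by (subst merge_filter2[OF v2]) (use sg in \<open>auto simp: filter_id_conv\<close>)
  show c1: "cnt1 w = n" using f1 by (simp add: cnt1_def)
  show lw: "length w = n + m" using Sh_len[OF s] by (simp add: w_def)
  show "canon w = \<gamma>" unfolding canon_def c1 pat lw using g by simp
  show "peel w = g" unfolding peel_def f2 by (simp add: o_def)
qed

lemma filter_eq_replicate: "filter (\<lambda>v. v = a) xs = replicate (length (filter (\<lambda>v. v = a) xs)) a"
  by (induction xs) auto

lemma decomp:
  assumes a: "(f, x # xs) \<in> P n X" and ne: "xs \<noteq> []"
  shows "1 \<le> cnt1 f" "cnt1 f < n" "canon f \<in> Sh (cnt1 f) (n - cnt1 f)"
    "(replicate (cnt1 f) 1, [x]) \<in> P (cnt1 f) X" "(peel f, xs) \<in> P (n - cnt1 f) X"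
    "basis_op (canon f) (replicate (cnt1 f) 1, [x]) (peel f, xs) = (f, x # xs)"
proof -
  define k where "k = cnt1 f"
  have lf: "length f = n" and sf: "set f = {1..Suc (length xs)}" using a by (auto simp: P_def)
  have fibc: "\<And>i. 1 \<le> i \<Longrightarrow> i \<le> Suc (length xs) \<Longrightarrow> (x # xs) ! (i - 1) \<in> X (fib f i)"
    using a by (auto simp: P_def)
  have l1: "length (filter (\<lambda>v. v \<noteq> 1) f) = n - k"
    using len_compl[of "\<lambda>v. v = 1" f] lf by (simp add: k_def cnt1_def)
  have "1 \<in> set f" using sf by simp
  then have "filter (\<lambda>v. v = 1) f \<noteq> []" by (simp add: filter_empty_conv)
  then show k1: "1 \<le> cnt1 f" by (simp add: cnt1_def Suc_le_eq)
  have "2 \<in> set f" using sf ne by (cases xs) auto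
  then have "filter (\<lambda>v. v \<noteq> 1) f \<noteq> []" by (auto simp: filter_empty_conv intro!: bexI[of _ 2])
  then have "0 < length (filter (\<lambda>v. v \<noteq> 1) f)" by blast
  then have "0 < n - k" using l1 by linarith
  then show kn: "cnt1 f < n" by (simp add: k_def)
  define c where "c = map (\<lambda>v. v = 1) f"
  have nk: "n = k + (n - k)" using kn by (simp add: k_def)
  have v: "valid c [1..<k+1] [k+1..<n+1]"
    unfolding valid_def c_def len_filter_map_id len_filter_map_not using l1 kn by (simp add: k_def cnt1_def)
  have cf: "canon f = merge c [1..<k+1] [k+1..<n+1]" by (simp add: canon_def c_def k_def lf)
  show "canon f \<in> Sh (cnt1 f) (n - cnt1 f)"
    unfolding k_def[symmetric] Sh_char cf
  proof (intro conjI)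
    show "length (merge c [1..<k + 1] [k + 1..<n + 1]) = k + (n - k)" using nk by (simp add: c_def lf)
    show "filter (\<lambda>v. v \<le> k) (merge c [1..<k + 1] [k + 1..<n + 1]) = [1..<k + 1]"
      by (subst merge_filter1[OF v]) auto
    show "filter (\<lambda>v. k < v) (merge c [1..<k + 1] [k + 1..<n + 1]) = [k + 1..<k + (n - k) + 1]"
      using nk by (subst merge_filter2[OF v]) auto
  qed
  have fib1: "fib f 1 = k" by (simp add: fib_len k_def cnt1_def)
  show "(replicate (cnt1 f) 1, [x]) \<in> P (cnt1 f) X"
    using k1 fibc[of 1] fib1 by (auto simp: P_def fib_len k_def)
  have lp: "length (peel f) = n - k" using l1 by (simp add: peel_def)
  have sp: "set (peel f) = {1..length xs}"
  proof
    show "set (peel f) \<subseteq> {1..length xs}" using sf by (auto simp: peel_def)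
    show "{1..length xs} \<subseteq> set (peel f)"
    proof
      fix j assume j: "j \<in> {1..length xs}"
      then have "Suc j \<in> set f" "Suc j \<noteq> 1" using sf by auto
      then show "j \<in> set (peel f)" unfolding peel_def by (force simp: image_iff)
    qed
  qed
  have "card (set (peel f)) \<le> length (peel f)" by (rule card_length)
  then have lx: "length xs \<le> n - k" using sp lp by simp
  have fibp: "fib (peel f) i = fib f (Suc i)" if "1 \<le> i" for i
  proof -
    have "filter (\<lambda>v. v = i) (peel f) = map (\<lambda>v. v - 1) (filter (\<lambda>v. v = Suc i) f)"
      unfolding peel_def filter_map filter_filter o_def using that
      by (intro arg_cong2[where f=map] filter_cong) auto
    then show ?thesis by (simp add: fib_len)
  qed
  show "(peel f, xs) \<in> P (n - cnt1 f) X"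
    unfolding P_def k_def[symmetric]
  proof (intro CollectI case_prodI conjI allI impI)
    fix i assume i: "1 \<le> i \<and> i \<le> length xs"
    show "xs ! (i - 1) \<in> X (fib (peel f) i)"
      using fibc[of "Suc i"] i fibp[of i] by (cases i) auto
  qed (use lp sp lx ne in \<open>auto simp: Suc_le_eq\<close>)
  define M where "M = replicate k 1 @ map (\<lambda>v. v + 1) (peel f)"
  have mp: "map (\<lambda>v. v + 1) (peel f) = filter (\<lambda>v. v \<noteq> 1) f"
    unfolding peel_def map_map o_def using sf by (intro map_idI) auto
  have "comp (mtimes (replicate k 1) 1 (peel f)) (canon f) = map (app M) (merge c [1..<k+1] [k+1..<n+1])"
    by (simp add: comp_def mtimes_def M_def cf)
  also have "\<dots> = merge c (map (app M) [1..<k+1]) (map (app M) [k+1..<n+1])"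
    by (rule merge_map[OF v])
  also have "map (app M) [1..<k+1] = replicate k 1"
    using app_upt1[of "replicate k 1" "map (\<lambda>v. v + 1) (peel f)"] by (simp add: M_def)
  also have "map (app M) [k+1..<n+1] = map (\<lambda>v. v + 1) (peel f)"
    using app_upt2[of "replicate k 1" "map (\<lambda>v. v + 1) (peel f)"] lp nk by (simp add: M_def)
  finally have e1: "comp (mtimes (replicate k 1) 1 (peel f)) (canon f) = merge c (replicate k 1) (map (\<lambda>v. v + 1) (peel f))" .
  have e2: "replicate k 1 = filter (\<lambda>v. v = 1) f"
    by (subst filter_eq_replicate) (simp add: k_def cnt1_def)
  have "merge c (replicate k 1) (map (\<lambda>v. v + 1) (peel f)) = f"
    unfolding mp c_def e2 by (rule merge_filter)
  then have "comp (mtimes (replicate k 1) 1 (peel f)) (canon f) = f" using e1 by simp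
  then show "basis_op (canon f) (replicate (cnt1 f) 1, [x]) (peel f, xs) = (f, x # xs)"
    by (simp add: basis_op_def k_def)
qed


lemma map_sub_upt_gen: "map (\<lambda>v. v - n) [n + a..<n + b] = [a..<b]"
  by (rule nth_equalityI) auto

lemma reassoc:
  assumes s: "\<sigma> \<in> Sh n m" and l: "lam \<in> Sh (n+m) r"
  shows "\<exists>\<gamma> \<delta>. \<gamma> \<in> Sh n (m+r) \<and> \<delta> \<in> Sh m r \<and> comp (ptimes (idw n) \<delta>) \<gamma> = comp (ptimes \<sigma> (idw r)) lam"
proof -
  define \<theta> where "\<theta> = comp (ptimes \<sigma> (idw r)) lam"
  define cl where "cl = map (\<lambda>v. v \<le> n + m) lam"
  define I3 where "I3 = [n+m+1..<n+m+r+1]"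
  have lm: "lam = merge cl [1..<n+m+1] I3" and vl: "valid cl [1..<n+m+1] I3"
    using Sh_merge[OF l] by (auto simp: cl_def I3_def)
  have ls: "length \<sigma> = n + m" by (rule Sh_len[OF s])
  define S where "S = \<sigma> @ map (\<lambda>v. v + length \<sigma>) [1..<r+1]"
  have "\<theta> = map (app S) lam" by (simp add: \<theta>_def comp_def ptimes_def idw_def S_def)
  also have "\<dots> = merge cl (map (app S) [1..<n+m+1]) (map (app S) I3)"
    by (subst lm) (rule merge_map[OF vl])
  also have "map (app S) [1..<n+m+1] = \<sigma>"
    using app_upt1[of \<sigma> "map (\<lambda>v. v + length \<sigma>) [1..<r+1]"] ls by (simp add: S_def)
  also have "map (app S) I3 = map (\<lambda>v. v + length \<sigma>) [1..<r+1]"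
    using app_upt2[of \<sigma> "map (\<lambda>v. v + length \<sigma>) [1..<r+1]"] ls by (simp add: S_def I3_def)
  also have "map (\<lambda>v. v + length \<sigma>) [1..<r+1] = I3"
    using ls by (simp only: map_add_upt1 I3_def)
  finally have th: "\<theta> = merge cl \<sigma> I3" .
  have v2: "valid cl \<sigma> I3" using vl ls by (simp add: valid_def)
  have lth: "length \<theta> = n + m + r" using Sh_len[OF l] by (simp add: \<theta>_def)
  have sr: "\<forall>v\<in>set \<sigma>. 1 \<le> v \<and> v \<le> n + m" by (rule Sh_range[OF s])
  have sf1: "filter (\<lambda>v. v \<le> n) \<sigma> = [1..<n+1]" and sf2: "filter (\<lambda>v. n < v) \<sigma> = [n+1..<n+m+1]"
    using s by (simp_all add: Sh_char)
  have F1: "filter (\<lambda>v. v \<le> n) \<theta> = [1..<n+1]"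
    unfolding th by (subst merge_filter1[OF v2]) (auto simp: I3_def sf1)
  have F2: "filter (\<lambda>v. n < v \<and> v \<le> n + m) \<theta> = [n+1..<n+m+1]"
  proof -
    have "filter (\<lambda>v. n < v \<and> v \<le> n + m) \<theta> = filter (\<lambda>v. n < v \<and> v \<le> n + m) \<sigma>"
      unfolding th by (rule merge_filter1[OF v2]) (auto simp: I3_def)
    also have "\<dots> = filter (\<lambda>v. n < v) \<sigma>" using sr by (intro filter_cong) auto
    finally show ?thesis using sf2 by simp
  qed
  have F3: "filter (\<lambda>v. n + m < v) \<theta> = I3"
  proof -
    have "filter (\<lambda>v. n + m < v) \<theta> = filter (\<lambda>v. n + m < v) I3"
      unfolding th by (rule merge_filter2[OF v2]) (use sr in auto)
    also have "\<dots> = I3" by (auto simp: I3_def)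
    finally show ?thesis .
  qed
  define c where "c = map (\<lambda>v. v \<le> n) \<theta>"
  define \<gamma> where "\<gamma> = merge c [1..<n+1] [n+1..<n+m+r+1]"
  define \<delta> where "\<delta> = map (\<lambda>v. v - n) (filter (\<lambda>v. n < v) \<theta>)"
  have lf1: "length (filter (\<lambda>v. \<not> v \<le> n) \<theta>) = m + r"
    using len_compl[of "\<lambda>v. v \<le> n" \<theta>] F1 lth by simp
  have vc: "valid c [1..<n+1] [n+1..<n+m+r+1]"
    unfolding valid_def c_def len_filter_map_id len_filter_map_not using F1 lf1 by simp
  have gS: "\<gamma> \<in> Sh n (m+r)" unfolding Sh_char
  proof (intro conjI)
    show "length \<gamma> = n + (m + r)" using lth by (simp add: \<gamma>_def c_def)
    show "filter (\<lambda>v. v \<le> n) \<gamma> = [1..<n + 1]"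
      unfolding \<gamma>_def by (subst merge_filter1[OF vc]) auto
    show "filter (\<lambda>v. n < v) \<gamma> = [n + 1..<n + (m + r) + 1]"
      unfolding \<gamma>_def by (subst merge_filter2[OF vc]) (auto simp: add.assoc)
  qed
  have d1: "filter (\<lambda>v. v \<le> m) \<delta> = [1..<m+1]"
  proof -
    have "filter (\<lambda>v. v \<le> m) \<delta> = map (\<lambda>v. v - n) (filter (\<lambda>v. n < v \<and> v \<le> n + m) \<theta>)"
      unfolding \<delta>_def filter_map filter_filter o_def
      by (rule arg_cong[where f="map _"], rule filter_cong) auto
    also have "\<dots> = [1..<m+1]" unfolding F2 using map_sub_upt_gen[of n 1 "m+1"] by (simp add: add.assoc)
    finally show ?thesis .
  qed
  have d2: "filter (\<lambda>v. m < v) \<delta> = [m+1..<m+r+1]"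
  proof -
    have "filter (\<lambda>v. m < v) \<delta> = map (\<lambda>v. v - n) (filter (\<lambda>v. n + m < v) \<theta>)"
      unfolding \<delta>_def filter_map filter_filter o_def
      by (rule arg_cong[where f="map _"], rule filter_cong) auto
    also have "\<dots> = [m+1..<m+r+1]" unfolding F3 I3_def using map_sub_upt_gen[of n "m+1" "m+r+1"] by (simp add: add.assoc)
    finally show ?thesis .
  qed
  have ld: "length \<delta> = m + r"
    using sum_length_filter_compl[of "\<lambda>v. v \<le> m" \<delta>] d1 d2 by (simp add: not_le)
  have dS: "\<delta> \<in> Sh m r" unfolding Sh_char using d1 d2 ld by simp
  define T where "T = [1..<n+1] @ map (\<lambda>v. v + n) \<delta>"
  have "comp (ptimes (idw n) \<delta>) \<gamma> = map (app T) \<gamma>"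
    by (simp add: comp_def ptimes_def idw_def T_def)
  also have "\<dots> = merge c (map (app T) [1..<n+1]) (map (app T) [n+1..<n+m+r+1])"
    unfolding \<gamma>_def by (rule merge_map[OF vc])
  also have "map (app T) [1..<n+1] = [1..<n+1]"
    using app_upt1[of "[1..<n+1]" "map (\<lambda>v. v + n) \<delta>"] by (simp add: T_def)
  also have "map (app T) [n+1..<n+m+r+1] = map (\<lambda>v. v + n) \<delta>"
    using app_upt2[of "[1..<n+1]" "map (\<lambda>v. v + n) \<delta>"] ld by (simp add: T_def add.assoc)
  also have "map (\<lambda>v. v + n) \<delta> = filter (\<lambda>v. \<not> v \<le> n) \<theta>"
  proof -
    have "map (\<lambda>v. v + n) \<delta> = filter (\<lambda>v. n < v) \<theta>"
      unfolding \<delta>_def map_map o_def by (rule map_idI) auto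
    then show ?thesis by (simp add: not_le)
  qed
  also have "[1..<n+1] = filter (\<lambda>v. v \<le> n) \<theta>" using F1 by simp
  finally have "comp (ptimes (idw n) \<delta>) \<gamma> = \<theta>" unfolding c_def merge_filter .
  then show ?thesis using gS dS by (auto simp: \<theta>_def)
qed


fun PhiB :: "(nat \<Rightarrow> 'x \<Rightarrow> 'v::zero) \<Rightarrow> (nat \<Rightarrow> nat \<Rightarrow> nat list \<Rightarrow> 'v \<Rightarrow> 'v \<Rightarrow> 'v) \<Rightarrow> nat list \<Rightarrow> 'x list \<Rightarrow> 'v" where
  "PhiB \<phi> op f [] = 0"
| "PhiB \<phi> op f [x] = \<phi> (length f) x"
| "PhiB \<phi> op f (x # y # ys) = op (cnt1 f) (length f - cnt1 f) (canon f) (\<phi> (cnt1 f) x) (PhiB \<phi> op (peel f) (y # ys))"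

lemma SA_closed: "shuffle_algebra s A op \<Longrightarrow> \<gamma> \<in> Sh n m \<Longrightarrow> x \<in> A n \<Longrightarrow> y \<in> A m \<Longrightarrow> op n m \<gamma> x y \<in> A (n+m)"
  by (simp add: shuffle_algebra_def)

lemma SA_assoc: "shuffle_algebra s A op \<Longrightarrow> \<gamma> \<in> Sh n (m+r) \<Longrightarrow> \<delta> \<in> Sh m r \<Longrightarrow> \<sigma> \<in> Sh n m \<Longrightarrow> lam \<in> Sh (n+m) r
  \<Longrightarrow> comp (ptimes (idw n) \<delta>) \<gamma> = comp (ptimes \<sigma> (idw r)) lam \<Longrightarrow> x \<in> A n \<Longrightarrow> y \<in> A m \<Longrightarrow> z \<in> A r
  \<Longrightarrow> op n (m+r) \<gamma> x (op m r \<delta> y z) = op (n+m) r lam (op n m \<sigma> x y) z"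
  unfolding shuffle_algebra_def by blast

lemma single_P: assumes "(f, [x]) \<in> P n X" shows "f = replicate n 1" "x \<in> X n" "1 \<le> n"
proof -
  have lf: "length f = n" and sf: "set f = {1}" and fx: "x \<in> X (fib f 1)" using assms by (auto simp: P_def)
  have "replicate (length f) 1 = f" using sf by (intro replicate_length_same) auto
  then show fr: "f = replicate n 1" using lf by simp
  have "fib f 1 = n" using fr by (simp add: fib_len)
  then show "x \<in> X n" using fx by simp
  show "1 \<le> n" using assms by (auto simp: P_def)
qed

lemma PhiB_in:
  assumes sa: "shuffle_algebra scale B opB" and ph: "\<forall>n\<ge>1. \<forall>x\<in>X n. \<phi> n x \<in> B n"
  shows "(f, xs) \<in> P n X \<Longrightarrow> PhiB \<phi> opB f xs \<in> B n"
proof (induction "length xs" arbitrary: f xs n rule: less_induct)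
  case less
  show ?case
  proof (cases xs)
    case Nil then show ?thesis using less.prems by (simp add: P_def)
  next
    case (Cons x xs')
    show ?thesis
    proof (cases xs')
      case Nil
      then have "(f, [x]) \<in> P n X" using less.prems Cons by simp
      then show ?thesis using single_P[of f x n X] ph Cons Nil by simp
    next
      case (Cons y ys)
      have a: "(f, x # y # ys) \<in> P n X" using less.prems \<open>xs = x # xs'\<close> Cons by simp
      note d = decomp[OF a, simplified]
      have lf: "length f = n" using a by (simp add: P_def)
      have "PhiB \<phi> opB (peel f) (y # ys) \<in> B (n - cnt1 f)"
        using less.hyps[of "y # ys" "peel f" "n - cnt1 f"] d(5) \<open>xs = x # xs'\<close> Cons by simp
      moreover have "\<phi> (cnt1 f) x \<in> B (cnt1 f)" using single_P(2)[OF d(4)] d(1) ph by simp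
      ultimately have "opB (cnt1 f) (n - cnt1 f) (canon f) (\<phi> (cnt1 f) x) (PhiB \<phi> opB (peel f) (y # ys)) \<in> B (cnt1 f + (n - cnt1 f))"
        using SA_closed[OF sa d(3)] by blast
      then show ?thesis using d(2) lf \<open>xs = x # xs'\<close> Cons by simp
    qed
  qed
qed

lemma PhiB_single:
  assumes s: "\<gamma> \<in> Sh n m" and b: "(g, ys) \<in> P m X"
  shows "PhiB \<phi> op (comp (mtimes (replicate n 1) 1 g) \<gamma>) (x # ys) = op n m \<gamma> (\<phi> n x) (PhiB \<phi> op g ys)"
proof -
  obtain y ys' where ys: "ys = y # ys'" using b by (cases ys) (auto simp: P_def)
  define w where "w = comp (mtimes (replicate n 1) 1 g) \<gamma>"
  have sb: "cnt1 w = n" "canon w = \<gamma>" "peel w = g" "length w = n + m"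
    using single_block[OF s b] by (simp_all add: w_def)
  have "PhiB \<phi> op w (x # y # ys') = op n m \<gamma> (\<phi> n x) (PhiB \<phi> op g (y # ys'))"
    unfolding PhiB.simps(3) sb by simp
  then show ?thesis unfolding ys w_def .
qed

definition PB where "PB \<phi> op a = PhiB \<phi> op (fst a) (snd a)"

lemma PhiB_hom:
  assumes sa: "shuffle_algebra scale B opB" and ph: "\<forall>n\<ge>1. \<forall>x\<in>X n. \<phi> n x \<in> B n"
    and b: "(g, ys) \<in> P m X"
  shows "(f, xs) \<in> P n X \<Longrightarrow> \<gamma> \<in> Sh n m \<Longrightarrow>
     PB \<phi> opB (basis_op \<gamma> (f, xs) (g, ys)) = opB n m \<gamma> (PB \<phi> opB (f, xs)) (PB \<phi> opB (g, ys))"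
proof (induction "length xs" arbitrary: f xs n \<gamma> rule: less_induct)
  case less
  show ?case
  proof (cases xs)
    case Nil then show ?thesis using less.prems by (simp add: P_def)
  next
    case (Cons x xs')
    show ?thesis
    proof (cases xs')
      case Nil
      then have a: "(f, [x]) \<in> P n X" using less.prems Cons by simp
      note sp = single_P[OF a]
      show ?thesis using PhiB_single[OF less.prems(2) b, of \<phi> opB x] sp(1) Cons Nil
        by (simp add: PB_def basis_op_def)
    next
      case (Cons y zs)
      have xs: "xs = x # y # zs" using \<open>xs = x # xs'\<close> Cons by simp
      have a: "(f, x # y # zs) \<in> P n X" using less.prems xs by simp
      note d = decomp[OF a, simplified]
      define k where "k = cnt1 f"
      have lf: "length f = n" using a by (simp add: P_def)
      have nk: "n = k + (n - k)" using d(2) by (simp add: k_def)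
      have lam: "\<gamma> \<in> Sh (k + (n - k)) m" using less.prems(2) nk by simp
      have cs: "canon f \<in> Sh k (n - k)" using d(3) by (simp add: k_def)
      obtain \<gamma>2 \<delta> where g2: "\<gamma>2 \<in> Sh k (n - k + m)" and dl: "\<delta> \<in> Sh (n - k) m"
        and cond: "comp (ptimes (idw k) \<delta>) \<gamma>2 = comp (ptimes (canon f) (idw m)) \<gamma>"
        using reassoc[OF cs lam] by blast
      define e where "e = (replicate k (1::nat), [x])"
      define a' where "a' = (peel f, y # zs)"
      have eP: "(replicate k 1, [x]) \<in> P k X" using d(4) by (simp add: k_def)
      have aP: "(peel f, y # zs) \<in> P (n - k) X" using d(5) by (simp add: k_def)
      have lg: "length g = m" using b by (simp add: P_def)
      have lp: "length (peel f) = n - k" using aP by (simp add: P_def)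
      have af: "basis_op (canon f) e a' = (f, xs)" using d(6) xs by (simp add: e_def a'_def k_def)
      have ba: "basis_op \<gamma>2 e (basis_op \<delta> a' (g, ys)) = basis_op \<gamma> (f, xs) (g, ys)"
        unfolding af[symmetric] e_def a'_def
        by (rule basis_assoc[OF _ lp lg g2 dl cs lam cond]) simp
      obtain h ws where c: "basis_op \<delta> a' (g, ys) = (h, ws)" by fastforce
      have ws: "ws = (y # zs) @ ys" using c by (simp add: basis_op_def a'_def)
      have cP: "(h, ws) \<in> P (n - k + m) X" using P_closed[OF aP b dl] c by (simp add: a'_def)
      have IH: "PB \<phi> opB (h, ws) = opB (n - k) m \<delta> (PB \<phi> opB a') (PB \<phi> opB (g, ys))"
        using less.hyps[of "y # zs" "peel f" "n - k" \<delta>] aP dl xs c by (simp add: a'_def)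
      have "PB \<phi> opB (basis_op \<gamma> (f, xs) (g, ys)) = PB \<phi> opB (basis_op \<gamma>2 e (h, ws))"
        using ba c by simp
      also have "\<dots> = opB k (n - k + m) \<gamma>2 (\<phi> k x) (PB \<phi> opB (h, ws))"
        using PhiB_single[OF g2 cP, of \<phi> opB x] by (simp add: PB_def basis_op_def e_def)
      also have "\<dots> = opB k (n - k + m) \<gamma>2 (\<phi> k x) (opB (n - k) m \<delta> (PB \<phi> opB a') (PB \<phi> opB (g, ys)))"
        by (simp add: IH)
      also have "\<dots> = opB (k + (n - k)) m \<gamma> (opB k (n - k) (canon f) (\<phi> k x) (PB \<phi> opB a')) (PB \<phi> opB (g, ys))"
      proof (rule SA_assoc[OF sa g2 dl cs lam cond])
        show "\<phi> k x \<in> B k" using single_P[OF eP] ph by simp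
        show "PB \<phi> opB a' \<in> B (n - k)" using PhiB_in[OF sa ph aP] by (simp add: PB_def a'_def)
        show "PB \<phi> opB (g, ys) \<in> B m" using PhiB_in[OF sa ph b] by (simp add: PB_def)
      qed
      also have "opB k (n - k) (canon f) (\<phi> k x) (PB \<phi> opB a') = PB \<phi> opB (f, xs)"
        using lf xs by (simp add: PB_def a'_def k_def)
      finally show ?thesis using nk by simp
    qed
  qed
qed


definition lin_ext :: "('k::field \<Rightarrow> 'v::ab_group_add \<Rightarrow> 'v) \<Rightarrow> ('s \<Rightarrow> 'v) \<Rightarrow> ('s \<Rightarrow>\<^sub>0 'k) \<Rightarrow> 'v" where
  "lin_ext s Ph u = (\<Sum>a\<in>Poly_Mapping.keys u. s (Poly_Mapping.lookup u a) (Ph a))"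

definition bil :: "('s \<Rightarrow> 's \<Rightarrow> 's) \<Rightarrow> ('s \<Rightarrow>\<^sub>0 'k::field) \<Rightarrow> ('s \<Rightarrow>\<^sub>0 'k) \<Rightarrow> ('s \<Rightarrow>\<^sub>0 'k)" where
  "bil h p q = (\<Sum>a\<in>Poly_Mapping.keys p. \<Sum>b\<in>Poly_Mapping.keys q.
       Poly_Mapping.single (h a b) (Poly_Mapping.lookup p a * Poly_Mapping.lookup q b))"

lemma fop_bil: "fop n m \<gamma> = bil (basis_op \<gamma>)"
  by (simp add: fun_eq_iff fop_def bil_def)

lemma lookup_fscale[simp]: "Poly_Mapping.lookup (fscale c p) a = c * Poly_Mapping.lookup p a"
  by (simp add: fscale_def Poly_Mapping.map.rep_eq when_def)

lemma keys_fscale: "Poly_Mapping.keys (fscale c p) \<subseteq> Poly_Mapping.keys p"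
  by (auto simp: in_keys_iff)

lemma vs_fscale: "vector_space (fscale :: 'k::field \<Rightarrow> ('s \<Rightarrow>\<^sub>0 'k) \<Rightarrow> _)"
  by unfold_locales (auto intro!: poly_mapping_eqI simp: lookup_add algebra_simps)

lemma fscale_sum: "fscale c (sum f A) = (\<Sum>a\<in>A. fscale c (f a))"
proof (induction A rule: infinite_finite_induct)
  case (insert x F)
  have "fscale c (f x + sum f F) = fscale c (f x) + fscale c (sum f F)"
    by (rule poly_mapping_eqI) (simp add: lookup_add algebra_simps)
  then show ?case using insert by simp
qed (auto intro!: poly_mapping_eqI)

lemma fscale_single: "fscale c (Poly_Mapping.single a d) = Poly_Mapping.single a (c * d)"
  by (rule poly_mapping_eqI) (simp add: lookup_single when_def)

lemma bil_superset:
  assumes "finite A" "Poly_Mapping.keys p \<subseteq> A" "finite C" "Poly_Mapping.keys q \<subseteq> C"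
  shows "bil h p q = (\<Sum>a\<in>A. \<Sum>b\<in>C. Poly_Mapping.single (h a b) (Poly_Mapping.lookup p a * Poly_Mapping.lookup q b))"
proof -
  have "bil h p q = (\<Sum>a\<in>A. \<Sum>b\<in>Poly_Mapping.keys q. Poly_Mapping.single (h a b) (Poly_Mapping.lookup p a * Poly_Mapping.lookup q b))"
    unfolding bil_def by (rule sum.mono_neutral_left) (use assms in \<open>auto simp: in_keys_iff\<close>)
  also have "\<dots> = (\<Sum>a\<in>A. \<Sum>b\<in>C. Poly_Mapping.single (h a b) (Poly_Mapping.lookup p a * Poly_Mapping.lookup q b))"
    by (intro sum.cong refl sum.mono_neutral_left) (use assms in \<open>auto simp: in_keys_iff\<close>)
  finally show ?thesis .
qed

lemma bil_add1: "bil h (p + p') q = bil h p q + bil h p' q"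
proof -
  let ?A = "Poly_Mapping.keys p \<union> Poly_Mapping.keys p'" and ?C = "Poly_Mapping.keys q"
  have "bil h (p + p') q = (\<Sum>a\<in>?A. \<Sum>b\<in>?C. Poly_Mapping.single (h a b) (Poly_Mapping.lookup (p + p') a * Poly_Mapping.lookup q b))"
    by (rule bil_superset) (auto simp: keys_add)
  also have "\<dots> = (\<Sum>a\<in>?A. \<Sum>b\<in>?C. Poly_Mapping.single (h a b) (Poly_Mapping.lookup p a * Poly_Mapping.lookup q b))
      + (\<Sum>a\<in>?A. \<Sum>b\<in>?C. Poly_Mapping.single (h a b) (Poly_Mapping.lookup p' a * Poly_Mapping.lookup q b))"
    by (simp add: lookup_add distrib_right single_add sum.distrib)
  also have "\<dots> = bil h p q + bil h p' q"
    by (subst (1 2) bil_superset[where A="?A" and C="?C"]) auto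
  finally show ?thesis .
qed

lemma bil_add2: "bil h p (q + q') = bil h p q + bil h p q'"
proof -
  let ?A = "Poly_Mapping.keys p" and ?C = "Poly_Mapping.keys q \<union> Poly_Mapping.keys q'"
  have "bil h p (q + q') = (\<Sum>a\<in>?A. \<Sum>b\<in>?C. Poly_Mapping.single (h a b) (Poly_Mapping.lookup p a * Poly_Mapping.lookup (q + q') b))"
    by (rule bil_superset) (auto simp: keys_add)
  also have "\<dots> = (\<Sum>a\<in>?A. \<Sum>b\<in>?C. Poly_Mapping.single (h a b) (Poly_Mapping.lookup p a * Poly_Mapping.lookup q b))
      + (\<Sum>a\<in>?A. \<Sum>b\<in>?C. Poly_Mapping.single (h a b) (Poly_Mapping.lookup p a * Poly_Mapping.lookup q' b))"
    by (simp add: lookup_add distrib_left single_add sum.distrib)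
  also have "\<dots> = bil h p q + bil h p q'"
    by (subst (1 2) bil_superset[where A="?A" and C="?C"]) auto
  finally show ?thesis .
qed

lemma bil_scale1: "bil h (fscale c p) q = fscale c (bil h p q)"
proof -
  have "bil h (fscale c p) q = (\<Sum>a\<in>Poly_Mapping.keys p. \<Sum>b\<in>Poly_Mapping.keys q. Poly_Mapping.single (h a b) (Poly_Mapping.lookup (fscale c p) a * Poly_Mapping.lookup q b))"
    by (rule bil_superset) (auto simp: keys_fscale)
  then show ?thesis by (simp add: bil_def fscale_sum fscale_single mult.assoc)
qed

lemma bil_scale2: "bil h p (fscale c q) = fscale c (bil h p q)"
proof -
  have "bil h p (fscale c q) = (\<Sum>a\<in>Poly_Mapping.keys p. \<Sum>b\<in>Poly_Mapping.keys q. Poly_Mapping.single (h a b) (Poly_Mapping.lookup p a * Poly_Mapping.lookup (fscale c q) b))"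
    by (rule bil_superset) (auto simp: keys_fscale)
  then show ?thesis by (simp add: bil_def fscale_sum fscale_single mult.left_commute)
qed

lemma bil_zero1: "bil h 0 q = 0" by (simp add: bil_def)
lemma bil_zero2: "bil h p 0 = 0" by (simp add: bil_def)

lemma bil_sum1: "bil h (sum f I) q = (\<Sum>i\<in>I. bil h (f i) q)"
  by (induction I rule: infinite_finite_induct) (auto simp: bil_zero1 bil_add1)

lemma bil_sum2: "bil h p (sum f I) = (\<Sum>i\<in>I. bil h p (f i))"
  by (induction I rule: infinite_finite_induct) (auto simp: bil_zero2 bil_add2)

lemma bil_single2: "bil h p (Poly_Mapping.single b d) = (\<Sum>a\<in>Poly_Mapping.keys p. Poly_Mapping.single (h a b) (Poly_Mapping.lookup p a * d))"
  by (subst bil_superset[where A="Poly_Mapping.keys p" and C="{b}"]) auto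

lemma bil_single1: "bil h (Poly_Mapping.single a c) q = (\<Sum>b\<in>Poly_Mapping.keys q. Poly_Mapping.single (h a b) (c * Poly_Mapping.lookup q b))"
  by (subst bil_superset[where A="{a}" and C="Poly_Mapping.keys q"]) auto

lemma bil_single: "bil h (Poly_Mapping.single a c) (Poly_Mapping.single b d) = Poly_Mapping.single (h a b) (c * d)"
  by (subst bil_superset[where A="{a}" and C="{b}"]) auto

lemma bil_assoc:
  assumes "\<And>a b c. a \<in> Poly_Mapping.keys p \<Longrightarrow> b \<in> Poly_Mapping.keys q \<Longrightarrow> c \<in> Poly_Mapping.keys s \<Longrightarrow> h1 a (h2 b c) = h3 (h4 a b) c"
  shows "bil h1 p (bil h2 q s) = bil h3 (bil h4 p q) s"
proof -
  let ?P = "Poly_Mapping.lookup p" and ?Q = "Poly_Mapping.lookup q" and ?S = "Poly_Mapping.lookup s"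
  have "bil h1 p (bil h2 q s) = (\<Sum>b\<in>Poly_Mapping.keys q. \<Sum>c\<in>Poly_Mapping.keys s. \<Sum>a\<in>Poly_Mapping.keys p.
      Poly_Mapping.single (h1 a (h2 b c)) (?P a * (?Q b * ?S c)))"
    by (simp add: bil_def[of h2] bil_sum2 bil_single2)
  also have "\<dots> = (\<Sum>b\<in>Poly_Mapping.keys q. \<Sum>c\<in>Poly_Mapping.keys s. \<Sum>a\<in>Poly_Mapping.keys p.
      Poly_Mapping.single (h3 (h4 a b) c) (?P a * ?Q b * ?S c))"
  proof -
    have "\<And>a b c. a \<in> Poly_Mapping.keys p \<Longrightarrow> b \<in> Poly_Mapping.keys q \<Longrightarrow> c \<in> Poly_Mapping.keys s \<Longrightarrow>
      Poly_Mapping.single (h1 a (h2 b c)) (?P a * (?Q b * ?S c)) = Poly_Mapping.single (h3 (h4 a b) c) (?P a * ?Q b * ?S c)"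
      using assms by (simp add: mult.assoc)
    then show ?thesis by (intro sum.cong refl) blast
  qed
  also have "\<dots> = (\<Sum>a\<in>Poly_Mapping.keys p. \<Sum>b\<in>Poly_Mapping.keys q. \<Sum>c\<in>Poly_Mapping.keys s.
      Poly_Mapping.single (h3 (h4 a b) c) (?P a * ?Q b * ?S c))"
    by (subst sum.swap) (rule sum.cong[OF refl], rule sum.swap)
  also have "\<dots> = bil h3 (bil h4 p q) s"
    by (simp add: bil_def[of h4] bil_sum1 bil_single1)
  finally show ?thesis .
qed

lemma keys_sum_subset: "Poly_Mapping.keys (sum f I) \<subseteq> (\<Union>i\<in>I. Poly_Mapping.keys (f i))"
proof (induction I rule: infinite_finite_induct)
  case (insert x F)
  then show ?case using keys_add[of "f x" "sum f F"] by auto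
qed auto

lemma keys_bil: "Poly_Mapping.keys (bil h p q) \<subseteq> {h a b | a b. a \<in> Poly_Mapping.keys p \<and> b \<in> Poly_Mapping.keys q}"
  unfolding bil_def using keys_sum_subset by (fastforce dest!: subsetD[OF keys_sum_subset] split: if_splits)


lemma vs_module: "vector_space s \<Longrightarrow> module s" by (simp add: vector_space_def module_def)

lemma subspace_sum':
  assumes md: "module s" and sub: "module.subspace s S"
  shows "(\<forall>i\<in>I. x i \<in> S) \<Longrightarrow> sum x I \<in> S"
proof (induction I rule: infinite_finite_induct)
  case (insert a F)
  have "\<forall>u\<in>S. \<forall>v\<in>S. u + v \<in> S" using sub by (simp add: module.subspace_def[OF md])
  then show ?case using insert by simp
qed (use sub in \<open>auto simp: module.subspace_def[OF md]\<close>)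

lemma lin_on_zero: "lin_on s1 s2 S f \<Longrightarrow> 0 \<in> S \<Longrightarrow> f 0 = 0"
proof -
  assume "lin_on s1 s2 S f" "0 \<in> S"
  then have "f (0 + 0) = f 0 + f 0" unfolding lin_on_def by blast
  then have "f 0 = f 0 + f 0" by simp
  then show "f 0 = 0" by (metis add_cancel_right_right)
qed

lemma lin_on_sum:
  assumes md: "module s1" and l: "lin_on s1 s2 S f" and sub: "module.subspace s1 S"
  shows "(\<forall>i\<in>I. x i \<in> S) \<Longrightarrow> f (sum x I) = (\<Sum>i\<in>I. f (x i))"
proof (induction I rule: infinite_finite_induct)
  case (infinite A) then show ?case using lin_on_zero[OF l] sub by (simp add: module.subspace_def[OF md])
next
  case empty then show ?case using lin_on_zero[OF l] sub by (simp add: module.subspace_def[OF md])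
next
  case (insert a F)
  have "sum x F \<in> S" using subspace_sum'[OF md sub, of F x] insert.prems by blast
  then have "f (x a + sum x F) = f (x a) + f (sum x F)" using l insert.prems by (simp add: lin_on_def)
  then show ?case using insert by simp
qed

lemma lin_on_scale: "lin_on s1 s2 S f \<Longrightarrow> x \<in> S \<Longrightarrow> f (s1 c x) = s2 c (f x)"
  by (simp add: lin_on_def)

lemma lin_on_add: "lin_on s1 s2 S f \<Longrightarrow> x \<in> S \<Longrightarrow> y \<in> S \<Longrightarrow> f (x + y) = f x + f y"
  by (simp add: lin_on_def)

lemma lin_ext_superset:
  assumes vs: "vector_space s" and "finite A" "Poly_Mapping.keys u \<subseteq> A"
  shows "lin_ext s Ph u = (\<Sum>a\<in>A. s (Poly_Mapping.lookup u a) (Ph a))"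
  unfolding lin_ext_def
  by (rule sum.mono_neutral_left) (use assms module.scale_zero_left[OF vs_module[OF vs]] in \<open>auto simp: in_keys_iff\<close>)

lemma lin_ext_add:
  assumes vs: "vector_space s"
  shows "lin_ext s Ph (u + v) = lin_ext s Ph u + lin_ext s Ph v"
proof -
  let ?A = "Poly_Mapping.keys u \<union> Poly_Mapping.keys v"
  have "lin_ext s Ph (u + v) = (\<Sum>a\<in>?A. s (Poly_Mapping.lookup (u + v) a) (Ph a))"
    by (rule lin_ext_superset[OF vs]) (auto simp: keys_add)
  also have "\<dots> = (\<Sum>a\<in>?A. s (Poly_Mapping.lookup u a) (Ph a)) + (\<Sum>a\<in>?A. s (Poly_Mapping.lookup v a) (Ph a))"
    by (simp add: lookup_add module.scale_left_distrib[OF vs_module[OF vs]] sum.distrib)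
  also have "\<dots> = lin_ext s Ph u + lin_ext s Ph v"
    by (subst (1 2) lin_ext_superset[OF vs, where A="?A"]) auto
  finally show ?thesis .
qed

lemma lin_ext_scale:
  assumes vs: "vector_space s"
  shows "lin_ext s Ph (fscale c u) = s c (lin_ext s Ph u)"
proof -
  have "lin_ext s Ph (fscale c u) = (\<Sum>a\<in>Poly_Mapping.keys u. s (Poly_Mapping.lookup (fscale c u) a) (Ph a))"
    by (rule lin_ext_superset[OF vs]) (auto simp: keys_fscale)
  then show ?thesis
    by (simp add: lin_ext_def module.scale_sum_right[OF vs_module[OF vs]] module.scale_scale[OF vs_module[OF vs]])
qed

lemma lin_ext_zero: "lin_ext s Ph 0 = 0" by (simp add: lin_ext_def)

lemma lin_ext_sum:
  assumes vs: "vector_space s"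
  shows "lin_ext s Ph (sum f I) = (\<Sum>i\<in>I. lin_ext s Ph (f i))"
  by (induction I rule: infinite_finite_induct) (auto simp: lin_ext_zero lin_ext_add[OF vs])

lemma lin_ext_single:
  assumes vs: "vector_space s"
  shows "lin_ext s Ph (Poly_Mapping.single a c) = s c (Ph a)"
  by (subst lin_ext_superset[OF vs, where A="{a}"]) auto

lemma FA_subspace:
  fixes X :: "nat \<Rightarrow> 'x set"
  shows "module.subspace (fscale :: 'k::field \<Rightarrow> _) (FA X n)"
  unfolding module.subspace_def[OF vs_module[OF vs_fscale]]
proof (intro conjI ballI allI)
  fix x y :: "(nat list \<times> 'x list) \<Rightarrow>\<^sub>0 'k"
  assume "x \<in> FA X n" "y \<in> FA X n"
  then show "x + y \<in> FA X n" using keys_add[of x y] unfolding FA_def by blast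
next
  fix c and x :: "(nat list \<times> 'x list) \<Rightarrow>\<^sub>0 'k"
  assume "x \<in> FA X n"
  then show "fscale c x \<in> FA X n" using keys_fscale[of c x] unfolding FA_def by blast
qed (simp add: FA_def)

lemma FA_shuffle: "shuffle_algebra (fscale :: 'k::field \<Rightarrow> _) (FA X) fop"
  unfolding shuffle_algebra_def graded_vs_def
proof (intro conjI allI impI ballI)
  show "vector_space (fscale :: 'k::field \<Rightarrow> _)" by (rule vs_fscale)
  show "module.subspace fscale (FA X n)" for n by (rule FA_subspace)
next
  fix n m \<gamma> and x y :: "(nat list \<times> 'a list) \<Rightarrow>\<^sub>0 'k"
  assume s: "\<gamma> \<in> Sh n m" and x: "x \<in> FA X n" and y: "y \<in> FA X m"
  show "fop n m \<gamma> x y \<in> FA X (n + m)"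
    unfolding FA_def fop_bil
  proof (intro CollectI subsetI)
    fix k assume "k \<in> Poly_Mapping.keys (bil (basis_op \<gamma>) x y)"
    then obtain a b where k: "k = basis_op \<gamma> a b" and a: "a \<in> Poly_Mapping.keys x" and b: "b \<in> Poly_Mapping.keys y"
      using keys_bil[of "basis_op \<gamma>" x y] by blast
    have pa: "(fst a, snd a) \<in> P n X" and pb: "(fst b, snd b) \<in> P m X" using a b x y by (auto simp: FA_def)
    have "basis_op \<gamma> (fst a, snd a) (fst b, snd b) \<in> P (n + m) X" by (rule P_closed[OF pa pb s])
    then show "k \<in> P (n + m) X" using k by simp
  qed
next
  fix n m \<gamma> and y :: "(nat list \<times> 'a list) \<Rightarrow>\<^sub>0 'k"
  show "lin_on fscale fscale (FA X n) (\<lambda>x. fop n m \<gamma> x y)"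
    unfolding lin_on_def fop_bil by (intro conjI ballI allI bil_add1 bil_scale1)
next
  fix n m \<gamma> and x :: "(nat list \<times> 'a list) \<Rightarrow>\<^sub>0 'k"
  show "lin_on fscale fscale (FA X m) (\<lambda>y. fop n m \<gamma> x y)"
    unfolding lin_on_def fop_bil by (intro conjI ballI allI bil_add2 bil_scale2)
next
  fix n m r \<gamma> \<delta> \<sigma> lam and x y z :: "(nat list \<times> 'a list) \<Rightarrow>\<^sub>0 'k"
  assume h: "\<gamma> \<in> Sh n (m + r) \<and> \<delta> \<in> Sh m r \<and> \<sigma> \<in> Sh n m \<and> lam \<in> Sh (n + m) r \<and>
       comp (ptimes (idw n) \<delta>) \<gamma> = comp (ptimes \<sigma> (idw r)) lam"
    and x: "x \<in> FA X n" and y: "y \<in> FA X m" and z: "z \<in> FA X r"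
  show "fop n (m + r) \<gamma> x (fop m r \<delta> y z) = fop (n + m) r lam (fop n m \<sigma> x y) z"
    unfolding fop_bil
  proof (rule bil_assoc)
    fix a b c assume a: "a \<in> Poly_Mapping.keys x" and b: "b \<in> Poly_Mapping.keys y" and c: "c \<in> Poly_Mapping.keys z"
    have l: "length (fst a) = n" "length (fst b) = m" "length (fst c) = r"
      using a b c x y z by (auto simp: FA_def P_def)
    from h have h1: "\<gamma> \<in> Sh n (m + r)" and h2: "\<delta> \<in> Sh m r" and h3: "\<sigma> \<in> Sh n m"
      and h4: "lam \<in> Sh (n + m) r" and h5: "comp (ptimes (idw n) \<delta>) \<gamma> = comp (ptimes \<sigma> (idw r)) lam"
      by auto
    have "basis_op \<gamma> (fst a, snd a) (basis_op \<delta> (fst b, snd b) (fst c, snd c))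
      = basis_op lam (basis_op \<sigma> (fst a, snd a) (fst b, snd b)) (fst c, snd c)"
      by (rule basis_assoc[OF l h1 h2 h3 h4 h5])
    then show "basis_op \<gamma> a (basis_op \<delta> b c) = basis_op lam (basis_op \<sigma> a b) c" by simp
  qed
qed


lemma pm_decomp: "u = (\<Sum>a\<in>Poly_Mapping.keys u. fscale (Poly_Mapping.lookup u a) (Poly_Mapping.single a 1))"
proof (rule poly_mapping_eqI)
  fix k
  have "Poly_Mapping.lookup (\<Sum>a\<in>Poly_Mapping.keys u. fscale (Poly_Mapping.lookup u a) (Poly_Mapping.single a 1)) k
      = (\<Sum>a\<in>Poly_Mapping.keys u. if a = k then Poly_Mapping.lookup u a else 0)"
    unfolding lookup_sum by (intro sum.cong refl) (simp add: lookup_single when_def)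
  also have "\<dots> = Poly_Mapping.lookup u k" by (simp only: sum.delta finite_keys) (simp add: in_keys_iff)
  finally show "Poly_Mapping.lookup u k = Poly_Mapping.lookup (\<Sum>a\<in>Poly_Mapping.keys u. fscale (Poly_Mapping.lookup u a) (Poly_Mapping.single a 1)) k" by simp
qed

lemma SA_vs: "shuffle_algebra s A op \<Longrightarrow> vector_space s"
  by (simp add: shuffle_algebra_def graded_vs_def)

lemma SA_sub: "shuffle_algebra s A op \<Longrightarrow> module.subspace s (A n)"
  by (simp add: shuffle_algebra_def graded_vs_def)

lemma SA_lin1: "shuffle_algebra s A op \<Longrightarrow> \<gamma> \<in> Sh n m \<Longrightarrow> y \<in> A m \<Longrightarrow> lin_on s s (A n) (\<lambda>x. op n m \<gamma> x y)"
  by (simp add: shuffle_algebra_def)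

lemma SA_lin2: "shuffle_algebra s A op \<Longrightarrow> \<gamma> \<in> Sh n m \<Longrightarrow> x \<in> A n \<Longrightarrow> lin_on s s (A m) (\<lambda>y. op n m \<gamma> x y)"
  by (simp add: shuffle_algebra_def)

lemma sub_scale: "module s \<Longrightarrow> module.subspace s S \<Longrightarrow> x \<in> S \<Longrightarrow> s c x \<in> S"
  by (simp add: module.subspace_def)

lemma bilin_expand:
  assumes sa: "shuffle_algebra s A op" and g: "\<gamma> \<in> Sh n m"
    and x: "\<forall>a\<in>I. x a \<in> A n" and y: "\<forall>b\<in>J. y b \<in> A m"
  shows "op n m \<gamma> (\<Sum>a\<in>I. s (c a) (x a)) (\<Sum>b\<in>J. s (d b) (y b))
       = (\<Sum>a\<in>I. \<Sum>b\<in>J. s (c a * d b) (op n m \<gamma> (x a) (y b)))"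
proof -
  have vs: "vector_space s" by (rule SA_vs[OF sa])
  note md = vs_module[OF vs]
  have ys: "\<forall>b\<in>J. s (d b) (y b) \<in> A m" using y by (simp add: sub_scale[OF md SA_sub[OF sa]])
  have xs: "\<forall>a\<in>I. s (c a) (x a) \<in> A n" using x by (simp add: sub_scale[OF md SA_sub[OF sa]])
  have Y: "(\<Sum>b\<in>J. s (d b) (y b)) \<in> A m" by (rule subspace_sum'[OF md SA_sub[OF sa] ys])
  have "op n m \<gamma> (\<Sum>a\<in>I. s (c a) (x a)) (\<Sum>b\<in>J. s (d b) (y b))
      = (\<Sum>a\<in>I. op n m \<gamma> (s (c a) (x a)) (\<Sum>b\<in>J. s (d b) (y b)))"
    by (rule lin_on_sum[OF md SA_lin1[OF sa g Y] SA_sub[OF sa] xs])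
  also have "\<dots> = (\<Sum>a\<in>I. s (c a) (op n m \<gamma> (x a) (\<Sum>b\<in>J. s (d b) (y b))))"
    using lin_on_scale[OF SA_lin1[OF sa g Y]] x by simp
  also have "\<dots> = (\<Sum>a\<in>I. s (c a) (\<Sum>b\<in>J. op n m \<gamma> (x a) (s (d b) (y b))))"
  proof (rule sum.cong[OF refl])
    fix a assume a: "a \<in> I"
    show "s (c a) (op n m \<gamma> (x a) (\<Sum>b\<in>J. s (d b) (y b))) = s (c a) (\<Sum>b\<in>J. op n m \<gamma> (x a) (s (d b) (y b)))"
      using lin_on_sum[OF md SA_lin2[OF sa g, of "x a"] SA_sub[OF sa] ys] x a by simp
  qed
  also have "\<dots> = (\<Sum>a\<in>I. \<Sum>b\<in>J. s (c a * d b) (op n m \<gamma> (x a) (y b)))"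
  proof (rule sum.cong[OF refl])
    fix a assume a: "a \<in> I"
    have "(\<Sum>b\<in>J. op n m \<gamma> (x a) (s (d b) (y b))) = (\<Sum>b\<in>J. s (d b) (op n m \<gamma> (x a) (y b)))"
      using lin_on_scale[OF SA_lin2[OF sa g, of "x a"]] x y a by simp
    then show "s (c a) (\<Sum>b\<in>J. op n m \<gamma> (x a) (s (d b) (y b))) = (\<Sum>b\<in>J. s (c a * d b) (op n m \<gamma> (x a) (y b)))"
      by (simp add: module.scale_sum_right[OF md] module.scale_scale[OF md])
  qed
  finally show ?thesis .
qed

lemma PB_in: "shuffle_algebra scale B opB \<Longrightarrow> \<forall>n\<ge>1. \<forall>x\<in>X n. \<phi> n x \<in> B n \<Longrightarrow> a \<in> P n X \<Longrightarrow> PB \<phi> opB a \<in> B n"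
  using PhiB_in[of scale B opB X \<phi> "fst a" "snd a" n] by (simp add: PB_def)

lemma Phi_hom:
  fixes scale :: "'k::field \<Rightarrow> 'v::ab_group_add \<Rightarrow> 'v" and X :: "nat \<Rightarrow> 'x set"
  assumes sa: "shuffle_algebra scale B opB" and ph: "\<forall>n\<ge>1. \<forall>x\<in>X n. \<phi> n x \<in> B n"
  shows "shuffle_hom fscale (FA X) fop scale B opB (\<lambda>n u. lin_ext scale (PB \<phi> opB) u)"
  unfolding shuffle_hom_def
proof (intro conjI allI ballI impI)
  have vs: "vector_space scale" by (rule SA_vs[OF sa])
  note md = vs_module[OF vs]
  fix n
  {
    fix u :: "(nat list \<times> 'x list) \<Rightarrow>\<^sub>0 'k" assume u: "u \<in> FA X n"
    show "lin_ext scale (PB \<phi> opB) u \<in> B n"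
      unfolding lin_ext_def
    proof (rule subspace_sum'[OF md SA_sub[OF sa]], intro ballI)
      fix a assume "a \<in> Poly_Mapping.keys u"
      then have "a \<in> P n X" using u by (auto simp: FA_def)
      then show "scale (Poly_Mapping.lookup u a) (PB \<phi> opB a) \<in> B n"
        by (rule sub_scale[OF md SA_sub[OF sa] PB_in[OF sa ph]])
    qed
  }
  show "lin_on fscale scale (FA X n) (lin_ext scale (PB \<phi> opB))"
    unfolding lin_on_def by (simp add: lin_ext_add[OF vs] lin_ext_scale[OF vs])
next
  have vs: "vector_space scale" by (rule SA_vs[OF sa])
  note md = vs_module[OF vs]
  fix n m \<gamma> and u v :: "(nat list \<times> 'x list) \<Rightarrow>\<^sub>0 'k"
  assume h: "\<gamma> \<in> Sh n m \<and> u \<in> FA X n \<and> v \<in> FA X m"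
  then have g: "\<gamma> \<in> Sh n m" and u: "u \<in> FA X n" and v: "v \<in> FA X m" by auto
  let ?U = "Poly_Mapping.lookup u" and ?V = "Poly_Mapping.lookup v"
  have ku: "\<forall>a\<in>Poly_Mapping.keys u. a \<in> P n X" and kv: "\<forall>b\<in>Poly_Mapping.keys v. b \<in> P m X"
    using u v by (auto simp: FA_def)
  have "lin_ext scale (PB \<phi> opB) (fop n m \<gamma> u v)
     = (\<Sum>a\<in>Poly_Mapping.keys u. \<Sum>b\<in>Poly_Mapping.keys v. scale (?U a * ?V b) (PB \<phi> opB (basis_op \<gamma> a b)))"
    by (simp add: fop_def lin_ext_sum[OF vs] lin_ext_single[OF vs])
  also have "\<dots> = (\<Sum>a\<in>Poly_Mapping.keys u. \<Sum>b\<in>Poly_Mapping.keys v. scale (?U a * ?V b) (opB n m \<gamma> (PB \<phi> opB a) (PB \<phi> opB b)))"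
  proof (intro sum.cong refl)
    fix a b assume a: "a \<in> Poly_Mapping.keys u" and b: "b \<in> Poly_Mapping.keys v"
    have "PB \<phi> opB (basis_op \<gamma> (fst a, snd a) (fst b, snd b)) = opB n m \<gamma> (PB \<phi> opB (fst a, snd a)) (PB \<phi> opB (fst b, snd b))"
      using PhiB_hom[OF sa ph, of "fst b" "snd b" m "fst a" "snd a" n \<gamma>] ku kv a b g by simp
    then show "scale (?U a * ?V b) (PB \<phi> opB (basis_op \<gamma> a b)) = scale (?U a * ?V b) (opB n m \<gamma> (PB \<phi> opB a) (PB \<phi> opB b))"
      by simp
  qed
  also have "\<dots> = opB n m \<gamma> (lin_ext scale (PB \<phi> opB) u) (lin_ext scale (PB \<phi> opB) v)"
    unfolding lin_ext_def
    by (rule bilin_expand[OF sa g, symmetric]) (use ku kv PB_in[OF sa ph] in auto)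
  finally show "lin_ext scale (PB \<phi> opB) (fop n m \<gamma> u v) = opB n m \<gamma> (lin_ext scale (PB \<phi> opB) u) (lin_ext scale (PB \<phi> opB) v)" .
qed

lemma Phi_gen:
  assumes sa: "shuffle_algebra scale B opB"
  shows "lin_ext scale (PB \<phi> opB) (gen n x) = \<phi> n x"
proof -
  have vs: "vector_space scale" by (rule SA_vs[OF sa])
  show ?thesis unfolding gen_def lin_ext_single[OF vs]
    by (simp add: PB_def module.scale_one[OF vs_module[OF vs]])
qed


lemma single_FA: "a \<in> P n X \<Longrightarrow> Poly_Mapping.single a (1::'k::field) \<in> FA X n"
  by (simp add: FA_def)

lemma Psi_basis:
  fixes scale :: "'k::field \<Rightarrow> 'v::ab_group_add \<Rightarrow> 'v" and X :: "nat \<Rightarrow> 'x set"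
  assumes sa: "shuffle_algebra scale B opB"
    and hom: "shuffle_hom fscale (FA X) fop scale B opB \<Psi>"
    and gn: "\<forall>n\<ge>1. \<forall>x\<in>X n. \<Psi> n (gen n x) = \<phi> n x"
  shows "(f, xs) \<in> P n X \<Longrightarrow> \<Psi> n (Poly_Mapping.single (f, xs) (1::'k)) = PB \<phi> opB (f, xs)"
proof (induction "length xs" arbitrary: f xs n rule: less_induct)
  case less
  show ?case
  proof (cases xs)
    case Nil then show ?thesis using less.prems by (simp add: P_def)
  next
    case (Cons x xs')
    show ?thesis
    proof (cases xs')
      case Nil
      then have a: "(f, [x]) \<in> P n X" using less.prems Cons by simp
      note sp = single_P[OF a]
      have "\<Psi> n (gen n x) = \<phi> n x" using gn sp by simp
      then show ?thesis using sp(1) Cons Nil by (simp add: gen_def PB_def)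
    next
      case (Cons y zs)
      have xs: "xs = x # y # zs" using \<open>xs = x # xs'\<close> Cons by simp
      have a: "(f, x # y # zs) \<in> P n X" using less.prems xs by simp
      note d = decomp[OF a, simplified]
      define k where "k = cnt1 f"
      have lf: "length f = n" using a by (simp add: P_def)
      have nk: "n = k + (n - k)" using d(2) by (simp add: k_def)
      have cs: "canon f \<in> Sh k (n - k)" using d(3) by (simp add: k_def)
      have eP: "(replicate k 1, [x]) \<in> P k X" using d(4) by (simp add: k_def)
      have aP: "(peel f, y # zs) \<in> P (n - k) X" using d(5) by (simp add: k_def)
      have sp: "1 \<le> k" "x \<in> X k" using single_P[OF eP] by auto
      have "Poly_Mapping.single (f, xs) (1::'k) = fop k (n - k) (canon f) (Poly_Mapping.single (replicate k 1, [x]) 1) (Poly_Mapping.single (peel f, y # zs) 1)"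
        using d(6) xs by (simp add: fop_bil bil_single k_def)
      then have "\<Psi> n (Poly_Mapping.single (f, xs) (1::'k)) = \<Psi> (k + (n - k)) (fop k (n - k) (canon f) (Poly_Mapping.single (replicate k 1, [x]) 1) (Poly_Mapping.single (peel f, y # zs) 1))"
        using nk by simp
      also have "\<dots> = opB k (n - k) (canon f) (\<Psi> k (Poly_Mapping.single (replicate k 1, [x]) 1)) (\<Psi> (n - k) (Poly_Mapping.single (peel f, y # zs) 1))"
        using hom cs single_FA[OF eP] single_FA[OF aP] unfolding shuffle_hom_def by blast
      also have "\<Psi> k (Poly_Mapping.single (replicate k 1, [x]) 1) = \<phi> k x"
        using gn sp by (simp add: gen_def)
      also have "\<Psi> (n - k) (Poly_Mapping.single (peel f, y # zs) 1) = PB \<phi> opB (peel f, y # zs)"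
        using less.hyps[of "y # zs" "peel f" "n - k"] aP xs by simp
      also have "opB k (n - k) (canon f) (\<phi> k x) (PB \<phi> opB (peel f, y # zs)) = PB \<phi> opB (f, xs)"
        using lf xs by (simp add: PB_def k_def)
      finally show ?thesis .
    qed
  qed
qed

lemma Psi_unique:
  fixes scale :: "'k::field \<Rightarrow> 'v::ab_group_add \<Rightarrow> 'v" and X :: "nat \<Rightarrow> 'x set"
  assumes sa: "shuffle_algebra scale B opB"
    and hom: "shuffle_hom fscale (FA X) fop scale B opB \<Psi>"
    and gn: "\<forall>n\<ge>1. \<forall>x\<in>X n. \<Psi> n (gen n x) = \<phi> n x"
    and u: "u \<in> FA X n"
  shows "\<Psi> n u = lin_ext scale (PB \<phi> opB) u"
proof -
  have vs: "vector_space scale" by (rule SA_vs[OF sa])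
  have lin: "lin_on fscale scale (FA X n) (\<Psi> n)" using hom by (simp add: shuffle_hom_def)
  have ku: "\<forall>a\<in>Poly_Mapping.keys u. a \<in> P n X" using u by (auto simp: FA_def)
  have mem: "\<forall>a\<in>Poly_Mapping.keys u. fscale (Poly_Mapping.lookup u a) (Poly_Mapping.single a (1::'k)) \<in> FA X n"
    using ku keys_fscale by (fastforce simp: FA_def)
  have "\<Psi> n u = \<Psi> n (\<Sum>a\<in>Poly_Mapping.keys u. fscale (Poly_Mapping.lookup u a) (Poly_Mapping.single a 1))"
    by (subst pm_decomp) (rule refl)
  also have "\<dots> = (\<Sum>a\<in>Poly_Mapping.keys u. \<Psi> n (fscale (Poly_Mapping.lookup u a) (Poly_Mapping.single a 1)))"
    by (rule lin_on_sum[OF vs_module[OF vs_fscale] lin FA_subspace mem])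
  also have "\<dots> = (\<Sum>a\<in>Poly_Mapping.keys u. scale (Poly_Mapping.lookup u a) (PB \<phi> opB a))"
  proof (rule sum.cong[OF refl])
    fix a assume a: "a \<in> Poly_Mapping.keys u"
    then have aP: "(fst a, snd a) \<in> P n X" using ku by simp
    have "\<Psi> n (fscale (Poly_Mapping.lookup u a) (Poly_Mapping.single a 1)) = scale (Poly_Mapping.lookup u a) (\<Psi> n (Poly_Mapping.single a 1))"
      by (rule lin_on_scale[OF lin single_FA]) (use aP in simp)
    also have "\<Psi> n (Poly_Mapping.single a 1) = PB \<phi> opB a"
      using Psi_basis[OF sa hom gn aP] by simp
    finally show "\<Psi> n (fscale (Poly_Mapping.lookup u a) (Poly_Mapping.single a 1)) = scale (Poly_Mapping.lookup u a) (PB \<phi> opB a)" .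
  qed
  also have "\<dots> = lin_ext scale (PB \<phi> opB) u" by (simp add: lin_ext_def)
  finally show ?thesis .
qed

theorem mainTheorem1:
  fixes X :: "nat \<Rightarrow> 'x set"
    and scale :: "'k::field \<Rightarrow> 'v::ab_group_add \<Rightarrow> 'v"
    and B :: "nat \<Rightarrow> 'v set"
    and opB :: "nat \<Rightarrow> nat \<Rightarrow> nat list \<Rightarrow> 'v \<Rightarrow> 'v \<Rightarrow> 'v"
    and \<phi> :: "nat \<Rightarrow> 'x \<Rightarrow> 'v"
  shows "shuffle_algebra (fscale :: 'k \<Rightarrow> _) (FA X) fop
    \<and> (shuffle_algebra scale B opB \<and> (\<forall>n\<ge>1. \<forall>x\<in>X n. \<phi> n x \<in> B n) \<longrightarrow>
        (\<exists>\<Phi>. shuffle_hom fscale (FA X) fop scale B opB \<Phi>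
              \<and> (\<forall>n\<ge>1. \<forall>x\<in>X n. \<Phi> n (gen n x) = \<phi> n x)
              \<and> (\<forall>\<Psi>. shuffle_hom fscale (FA X) fop scale B opB \<Psi>
                     \<and> (\<forall>n\<ge>1. \<forall>x\<in>X n. \<Psi> n (gen n x) = \<phi> n x)
                     \<longrightarrow> (\<forall>n. \<forall>u\<in>FA X n. \<Psi> n u = \<Phi> n u))))"
proof (intro conjI impI)
  show "shuffle_algebra (fscale :: 'k \<Rightarrow> _) (FA X) fop" by (rule FA_shuffle)
next
  assume h: "shuffle_algebra scale B opB \<and> (\<forall>n\<ge>1. \<forall>x\<in>X n. \<phi> n x \<in> B n)"
  then have sa: "shuffle_algebra scale B opB" and ph: "\<forall>n\<ge>1. \<forall>x\<in>X n. \<phi> n x \<in> B n" by auto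
  let ?\<Phi> = "\<lambda>(n::nat) (u :: (nat list \<times> 'x list) \<Rightarrow>\<^sub>0 'k). lin_ext scale (PB \<phi> opB) u"
  show "\<exists>\<Phi>. shuffle_hom fscale (FA X) fop scale B opB \<Phi>
              \<and> (\<forall>n\<ge>1. \<forall>x\<in>X n. \<Phi> n (gen n x) = \<phi> n x)
              \<and> (\<forall>\<Psi>. shuffle_hom fscale (FA X) fop scale B opB \<Psi>
                     \<and> (\<forall>n\<ge>1. \<forall>x\<in>X n. \<Psi> n (gen n x) = \<phi> n x)
                     \<longrightarrow> (\<forall>n. \<forall>u\<in>FA X n. \<Psi> n u = \<Phi> n u))"
  proof (intro exI[of _ ?\<Phi>] conjI allI impI ballI)
    show "shuffle_hom fscale (FA X) fop scale B opB ?\<Phi>" by (rule Phi_hom[OF sa ph])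
  next
    fix n x assume "1 \<le> n" "x \<in> X n"
    show "?\<Phi> n (gen n x) = \<phi> n x" by (simp add: Phi_gen[OF sa])
  next
    fix \<Psi> n and u :: "(nat list \<times> 'x list) \<Rightarrow>\<^sub>0 'k"
    assume hp: "shuffle_hom fscale (FA X) fop scale B opB \<Psi> \<and> (\<forall>n\<ge>1. \<forall>x\<in>X n. \<Psi> n (gen n x) = \<phi> n x)"
      and u: "u \<in> FA X n"
    show "\<Psi> n u = ?\<Phi> n u" using Psi_unique[OF sa _ _ u] hp by simp
  qed
qed


end
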